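(* Let $\mathcal D$ be a preduoidal category and $T$ a separately opmonoidal monad on $\mathcal D$, and suppose $\mathcal D^T$, with its lifted monoidal structures $(\circ,(\bot,T^\circ_0))$ and $(\bullet,(1,T^\bullet_0))$, carries a duoidal structure with interchange law $\xi_{a,b,c,d}\colon (a\bullet b)\circ(c\bullet d)\to(a\circ c)\bullet(b\circ d)$ and structure morphisms $\nu,\varpi,\iota$. Then $\nu,\varpi,\iota$ together with $$R_{a,b,c,d} := \xi_{Ta,Tb,Tc,Td}\cdot\big((\eta_a\bullet\eta_b)\circ(\eta_c\bullet\eta_d)\big)\colon (a\bullet b)\circ(c\bullet d)\to(Ta\circ Tc)\bullet(Tb\circ Td),\quad a,b,c,d\in\mathcal D$$ (with $Ta$ the free $T$-algebra $(Ta,\mu_a)$) form an R-matrix on $T$.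
   Context: Composition of morphisms is written $g\cdot f$ ($f$ first). A preduoidal category is a category $\mathcal D$ with two monoidal structures $(\circ,\bot)$ and $(\bullet,1)$ (associators $\alpha$, unitors $\lambda^\circ,\rho^\circ,\lambda^\bullet,\rho^\bullet$). A bimonad on a monoidal category $(\mathcal C,\otimes,I)$ is a monad $(B,\mu,\eta)$ with an opmonoidal structure $B_2\colon B(x\otimes y)\to Bx\otimes By$, $B_0\colon BI\to I$ such that $\mu,\eta$ are opmonoidal. A separately opmonoidal monad on $\mathcal D$ is a monad $(T,\mu,\eta)$ with a bimonad structure $(T^\circ_2,T^\circ_0)$ on $(\mathcal D,\circ,\bot)$ and one $(T^\bullet_2,T^\bullet_0)$ on $(\mathcal D,\bullet,1)$. Lifted monoidal structures on $\mathcal D^T$: $(a,\alpha)\circ(b,\beta)=(a\circ b,(\alpha\circ\beta)\cdot T^\circ_{2,a,b})$, unit $(\bot,T^\circ_0)$; $(a,\alpha)\bullet(b,\beta)=(a\bullet b,(\alpha\bullet\beta)\cdot T^\bullet_{2,a,b})$, unit $(1,T^\bullet_0)$. Duoidal category: a preduoidal category with a natural transformation $\zeta_{x,y,a,b}\colon (x\bullet y)\circ(a\bullet b)\to(x\circ a)\bullet(y\circ b)$ and morphisms $\nu\colon\bot\to\bot\bullet\bot$, $\varpi\colon 1\circ 1\to 1$, $\iota\colon\bot\to 1$ such that $(1,\varpi,\iota)$ is a monoid in $(\mathcal D,\circ,\bot)$, $(\bot,\nu,\iota)$ is a comonoid in $(\mathcal D,\bullet,1)$, and: (A1) $(\alpha\bullet\alpha)\cdot\zeta_{x\circ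 a,y\circ b,c,d}\cdot(\zeta_{x,y,a,b}\circ\mathrm{id}) = \zeta_{x,y,a\circ c,b\circ d}\cdot(\mathrm{id}\circ\zeta_{a,b,c,d})\cdot\alpha$; (A2) $\alpha\cdot(\zeta_{x,a,y,b}\bullet\mathrm{id})\cdot\zeta_{x\bullet a,c,y\bullet b,d} = (\mathrm{id}\bullet\zeta_{a,c,b,d})\cdot\zeta_{x,a\bullet c,y,b\bullet d}\cdot(\alpha\circ\alpha)$; (U) $\zeta_{\bot,\bot,a,b}\cdot(\nu\circ\mathrm{id})=((\lambda^\circ_a)^{-1}\bullet(\lambda^\circ_b)^{-1})\cdot\lambda^\circ_{a\bullet b}$, $\zeta_{a,b,\bot,\bot}\cdot(\mathrm{id}\circ\nu)=((\rho^\circ_a)^{-1}\bullet(\rho^\circ_b)^{-1})\cdot\rho^\circ_{a\bullet b}$, $(\varpi\bullet\mathrm{id})\cdot\zeta_{1,a,1,b}=(\lambda^\bullet_{a\circ b})^{-1}\cdot(\lambda^\bullet_a\circ\lambda^\bullet_b)$, $(\mathrm{id}\bullet\varpi)\cdot\zeta_{a,1,b,1}=(\rho^\bullet_{a\circ b})^{-1}\cdot(\rho^\bullet_a\circ\rho^\bullet_b)$. A duoidal structure on $\mathcal D^T$ means such data for the lifted structures with $\xi$ a natural family of $T$-algebra morphisms and $\nu,\varpi,\iota$ morphisms of $T$-algebras. R-matrix on $T$: a natural transformation $R_{a,b,c,d}\colon (a\bullet b)\circ(c\bullet d)\to(Ta\circ Tc)\bullet(Tb\circ Td)$ together with morphisms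 of $T$-algebras $\nu\colon(\bot,T^\circ_0)\to(\bot,T^\circ_0)\bullet(\bot,T^\circ_0)$, $\varpi\colon(1,T^\bullet_0)\circ(1,T^\bullet_0)\to(1,T^\bullet_0)$, $\iota\colon(\bot,T^\circ_0)\to(1,T^\bullet_0)$, such that $(1,\varpi,\iota)$ is a monoid in $(\mathcal D^T,\circ,\bot)$, $(\bot,\nu,\iota)$ is a comonoid in $(\mathcal D^T,\bullet,1)$, and (associators suppressed): (R-unit) for all $T$-algebras $(a,\alpha),(b,\beta)$: $((T^\circ_0\circ\alpha)\bullet(T^\circ_0\circ\beta))\cdot R_{\bot,\bot,a,b}\cdot(\nu\circ\mathrm{id})=((\lambda^\circ_a)^{-1}\bullet(\lambda^\circ_b)^{-1})\cdot\lambda^\circ_{a\bullet b}$; $((\alpha\circ T^\circ_0)\bullet(\beta\circ T^\circ_0))\cdot R_{a,b,\bot,\bot}\cdot(\mathrm{id}\circ\nu)=((\rho^\circ_a)^{-1}\bullet(\rho^\circ_b)^{-1})\cdot\rho^\circ_{a\bullet b}$; $(\varpi\bullet\mathrm{id})\cdot((T^\bullet_0\circ T^\bullet_0)\bullet(\alpha\circ\beta))\cdot R_{1,a,1,b}=(\lambda^\bullet_{a\circ b})^{-1}\cdot(\lambda^\bullet_a\circ\lambda^\bullet_b)$; $(\mathrm{id}\bullet\varpi)\cdot((\alpha\circ\beta)\bullet(T^\bullet_0\circ T^\bullet_0))\cdot R_{a,1,b,1}=(\rho^\bullet_{a\circ b})^{-1}\cdot(\rho^\bullet_a\circ\rho^\bullet_b)$.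 (R-lift) for all objects: $((\mu_a\circ\mu_c)\bullet(\mu_b\circ\mu_d))\cdot R_{Ta,Tb,Tc,Td}\cdot(T^\bullet_{2,a,b}\circ T^\bullet_{2,c,d})\cdot T^\circ_{2,a\bullet b,c\bullet d} = ((\mu_a\circ\mu_c)\bullet(\mu_b\circ\mu_d))\cdot(T^\circ_{2,Ta,Tc}\bullet T^\circ_{2,Tb,Td})\cdot T^\bullet_{2,Ta\circ Tc,Tb\circ Td}\cdot TR_{a,b,c,d}$. (R-1) for all objects: $((\mu_a\circ\mu_c\circ Tx)\bullet(\mu_b\circ\mu_d\circ Ty))\cdot((T^\circ_{2,Ta,Tc}\circ Tx)\bullet(T^\circ_{2,Tb,Td}\circ Ty))\cdot R_{Ta\circ Tc,Tb\circ Td,x,y}\cdot(R_{a,b,c,d}\circ\mathrm{id}) = ((Ta\circ\mu_c\circ\mu_x)\bullet(Tb\circ\mu_d\circ\mu_y))\cdot((Ta\circ T^\circ_{2,Tc,Tx})\bullet(Tb\circ T^\circ_{2,Td,Ty}))\cdot R_{a,b,Tc\circ Tx,Td\circ Ty}\cdot(\mathrm{id}\circ R_{c,d,x,y})$. (R-2) for all objects: $(((\mu_x\circ\mu_y)\bullet(\mu_a\circ\mu_b))\bullet\mathrm{id})\cdot(R_{Tx,Ta,Ty,Tb}\bullet\mathrm{id})\cdot((T^\bullet_{2,x,a}\circ T^\bullet_{2,y,b})\bullet\mathrm{id})\cdot R_{x\bullet a,c,y\bullet b,d} = (\mathrm{id}\bullet((\mu_a\circ\mu_b)\bullet(\mu_c\circ\mu_d)))\cdot(\mathrm{id}\bullet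 R_{Ta,Tc,Tb,Td})\cdot(\mathrm{id}\bullet(T^\bullet_{2,a,c}\circ T^\bullet_{2,b,d}))\cdot R_{x,a\bullet c,y,b\bullet d}\cdot(\alpha\circ\alpha)$. *)

theory Defs
  imports Main
begin

section \<open>Categories (hom-set presentation)\<close>

text \<open>A category is given by a set of objects, hom-sets, composition
  cmp g f (meaning g after f, the paper's g.f) and identities.\<close>

record ('o,'m) category =
  Obj :: "'o set"
  Hom :: "'o \<Rightarrow> 'o \<Rightarrow> 'm set"
  cmp :: "'m \<Rightarrow> 'm \<Rightarrow> 'm"
  idm :: "'o \<Rightarrow> 'm"

definition category :: "('o,'m) category \<Rightarrow> bool" where
  "category C \<longleftrightarrow>
     (\<forall>a b f. f \<in> Hom C a b \<longrightarrow> a \<in> Obj C \<and> b \<in> Obj C) \<and>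
     (\<forall>a\<in>Obj C. idm C a \<in> Hom C a a) \<and>
     (\<forall>a b c f g. f \<in> Hom C a b \<longrightarrow> g \<in> Hom C b c \<longrightarrow> cmp C g f \<in> Hom C a c) \<and>
     (\<forall>a b f. f \<in> Hom C a b \<longrightarrow> cmp C (idm C b) f = f \<and> cmp C f (idm C a) = f) \<and>
     (\<forall>a b c d f g h. f \<in> Hom C a b \<longrightarrow> g \<in> Hom C b c \<longrightarrow> h \<in> Hom C c d \<longrightarrow>
        cmp C h (cmp C g f) = cmp C (cmp C h g) f)"

fun cmps :: "('o,'m) category \<Rightarrow> 'm list \<Rightarrow> 'm" where
  "cmps C [] = undefined"
| "cmps C [f] = f"
| "cmps C (f # g # fs) = cmp C f (cmps C (g # fs))"

definition iso :: "('o,'m) category \<Rightarrow> 'o \<Rightarrow> 'o \<Rightarrow> 'm \<Rightarrow> bool" where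
  "iso C a b f \<longleftrightarrow> f \<in> Hom C a b \<and>
     (\<exists>g \<in> Hom C b a. cmp C g f = idm C a \<and> cmp C f g = idm C b)"

definition invm :: "('o,'m) category \<Rightarrow> 'o \<Rightarrow> 'o \<Rightarrow> 'm \<Rightarrow> 'm" where
  "invm C a b f = (THE g. g \<in> Hom C b a \<and> cmp C g f = idm C a \<and> cmp C f g = idm C b)"

record ('o,'m) monoidal =
  tob :: "'o \<Rightarrow> 'o \<Rightarrow> 'o"
  tm  :: "'m \<Rightarrow> 'm \<Rightarrow> 'm"
  unt :: "'o"
  asc :: "'o \<Rightarrow> 'o \<Rightarrow> 'o \<Rightarrow> 'm"
  lu  :: "'o \<Rightarrow> 'm"
  ru  :: "'o \<Rightarrow> 'm"

definition monoidal_cat :: "('o,'m) category \<Rightarrow> ('o,'m) monoidal \<Rightarrow> bool" where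
  "monoidal_cat C M \<longleftrightarrow> category C \<and>
    unt M \<in> Obj C \<and>
    (\<forall>a\<in>Obj C. \<forall>b\<in>Obj C. tob M a b \<in> Obj C) \<and>
    (\<forall>a b c d f g. f \<in> Hom C a b \<longrightarrow> g \<in> Hom C c d \<longrightarrow>
        tm M f g \<in> Hom C (tob M a c) (tob M b d)) \<and>
    (\<forall>a\<in>Obj C. \<forall>b\<in>Obj C. tm M (idm C a) (idm C b) = idm C (tob M a b)) \<and>
    (\<forall>a b c a' b' c' f f' g g'. f \<in> Hom C a b \<longrightarrow> f' \<in> Hom C b c \<longrightarrow>
        g \<in> Hom C a' b' \<longrightarrow> g' \<in> Hom C b' c' \<longrightarrow>
        tm M (cmp C f' f) (cmp C g' g) = cmp C (tm M f' g') (tm M f g)) \<and>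
    (\<forall>a\<in>Obj C. \<forall>b\<in>Obj C. \<forall>c\<in>Obj C.
        iso C (tob M (tob M a b) c) (tob M a (tob M b c)) (asc M a b c)) \<and>
    (\<forall>a b c a' b' c' f g h. f \<in> Hom C a a' \<longrightarrow> g \<in> Hom C b b' \<longrightarrow> h \<in> Hom C c c' \<longrightarrow>
        cmp C (asc M a' b' c') (tm M (tm M f g) h) = cmp C (tm M f (tm M g h)) (asc M a b c)) \<and>
    (\<forall>a\<in>Obj C. iso C (tob M (unt M) a) a (lu M a)) \<and>
    (\<forall>a b f. f \<in> Hom C a b \<longrightarrow>
        cmp C (lu M b) (tm M (idm C (unt M)) f) = cmp C f (lu M a)) \<and>
    (\<forall>a\<in>Obj C. iso C (tob M a (unt M)) a (ru M a)) \<and>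
    (\<forall>a b f. f \<in> Hom C a b \<longrightarrow>
        cmp C (ru M b) (tm M f (idm C (unt M))) = cmp C f (ru M a)) \<and>
    (\<forall>a\<in>Obj C. \<forall>b\<in>Obj C. \<forall>c\<in>Obj C. \<forall>d\<in>Obj C.
        cmps C [asc M a b (tob M c d), asc M (tob M a b) c d] =
        cmps C [tm M (idm C a) (asc M b c d), asc M a (tob M b c) d, tm M (asc M a b c) (idm C d)]) \<and>
    (\<forall>a\<in>Obj C. \<forall>b\<in>Obj C.
        cmp C (tm M (idm C a) (lu M b)) (asc M a (unt M) b) = tm M (ru M a) (idm C b))"

definition preduoidal :: "('o,'m) category \<Rightarrow> ('o,'m) monoidal \<Rightarrow> ('o,'m) monoidal \<Rightarrow> bool" where
  "preduoidal C Mc Mb \<longleftrightarrow> monoidal_cat C Mc \<and> monoidal_cat C Mb"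

record ('o,'m) monad =
  Tob :: "'o \<Rightarrow> 'o"
  Tm  :: "'m \<Rightarrow> 'm"
  mu  :: "'o \<Rightarrow> 'm"
  eta :: "'o \<Rightarrow> 'm"

definition monad :: "('o,'m) category \<Rightarrow> ('o,'m) monad \<Rightarrow> bool" where
  "monad C T \<longleftrightarrow> category C \<and>
    (\<forall>a\<in>Obj C. Tob T a \<in> Obj C) \<and>
    (\<forall>a b f. f \<in> Hom C a b \<longrightarrow> Tm T f \<in> Hom C (Tob T a) (Tob T b)) \<and>
    (\<forall>a\<in>Obj C. Tm T (idm C a) = idm C (Tob T a)) \<and>
    (\<forall>a b c f g. f \<in> Hom C a b \<longrightarrow> g \<in> Hom C b c \<longrightarrow>
        Tm T (cmp C g f) = cmp C (Tm T g) (Tm T f)) \<and>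
    (\<forall>a\<in>Obj C. mu T a \<in> Hom C (Tob T (Tob T a)) (Tob T a)) \<and>
    (\<forall>a\<in>Obj C. eta T a \<in> Hom C a (Tob T a)) \<and>
    (\<forall>a b f. f \<in> Hom C a b \<longrightarrow> cmp C (mu T b) (Tm T (Tm T f)) = cmp C (Tm T f) (mu T a)) \<and>
    (\<forall>a b f. f \<in> Hom C a b \<longrightarrow> cmp C (eta T b) f = cmp C (Tm T f) (eta T a)) \<and>
    (\<forall>a\<in>Obj C. cmp C (mu T a) (Tm T (mu T a)) = cmp C (mu T a) (mu T (Tob T a))) \<and>
    (\<forall>a\<in>Obj C. cmp C (mu T a) (eta T (Tob T a)) = idm C (Tob T a)) \<and>
    (\<forall>a\<in>Obj C. cmp C (mu T a) (Tm T (eta T a)) = idm C (Tob T a))"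

definition bimonad :: "('o,'m) category \<Rightarrow> ('o,'m) monoidal \<Rightarrow> ('o,'m) monad \<Rightarrow>
    ('o \<Rightarrow> 'o \<Rightarrow> 'm) \<Rightarrow> 'm \<Rightarrow> bool" where
  "bimonad C M T T2 T0 \<longleftrightarrow> monoidal_cat C M \<and> monad C T \<and>
    (\<forall>x\<in>Obj C. \<forall>y\<in>Obj C.
       T2 x y \<in> Hom C (Tob T (tob M x y)) (tob M (Tob T x) (Tob T y))) \<and>
    T0 \<in> Hom C (Tob T (unt M)) (unt M) \<and>
    (\<forall>x x' y y' f g. f \<in> Hom C x x' \<longrightarrow> g \<in> Hom C y y' \<longrightarrow>
       cmp C (T2 x' y') (Tm T (tm M f g)) = cmp C (tm M (Tm T f) (Tm T g)) (T2 x y)) \<and>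
    (\<forall>x\<in>Obj C. \<forall>y\<in>Obj C. \<forall>z\<in>Obj C.
       cmps C [asc M (Tob T x) (Tob T y) (Tob T z), tm M (T2 x y) (idm C (Tob T z)),
               T2 (tob M x y) z] =
       cmps C [tm M (idm C (Tob T x)) (T2 y z), T2 x (tob M y z), Tm T (asc M x y z)]) \<and>
    (\<forall>x\<in>Obj C. cmps C [lu M (Tob T x), tm M T0 (idm C (Tob T x)), T2 (unt M) x]
                 = Tm T (lu M x)) \<and>
    (\<forall>x\<in>Obj C. cmps C [ru M (Tob T x), tm M (idm C (Tob T x)) T0, T2 x (unt M)]
                 = Tm T (ru M x)) \<and>
    (\<forall>x\<in>Obj C. \<forall>y\<in>Obj C.
       cmp C (T2 x y) (mu T (tob M x y)) =
       cmps C [tm M (mu T x) (mu T y), T2 (Tob T x) (Tob T y), Tm T (T2 x y)]) \<and>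
    cmp C T0 (mu T (unt M)) = cmp C T0 (Tm T T0) \<and>
    (\<forall>x\<in>Obj C. \<forall>y\<in>Obj C.
       cmp C (T2 x y) (eta T (tob M x y)) = tm M (eta T x) (eta T y)) \<and>
    cmp C T0 (eta T (unt M)) = idm C (unt M)"

definition sep_opmonoidal_monad :: "('o,'m) category \<Rightarrow> ('o,'m) monoidal \<Rightarrow> ('o,'m) monoidal \<Rightarrow>
    ('o,'m) monad \<Rightarrow> ('o \<Rightarrow> 'o \<Rightarrow> 'm) \<Rightarrow> 'm \<Rightarrow> ('o \<Rightarrow> 'o \<Rightarrow> 'm) \<Rightarrow> 'm \<Rightarrow> bool" where
  "sep_opmonoidal_monad C Mc Mb T T2c T0c T2b T0b \<longleftrightarrow>
     preduoidal C Mc Mb \<and> bimonad C Mc T T2c T0c \<and> bimonad C Mb T T2b T0b"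

definition alg :: "('o,'m) category \<Rightarrow> ('o,'m) monad \<Rightarrow> 'o \<times> 'm \<Rightarrow> bool" where
  "alg C T A \<longleftrightarrow> fst A \<in> Obj C \<and> snd A \<in> Hom C (Tob T (fst A)) (fst A) \<and>
     cmp C (snd A) (eta T (fst A)) = idm C (fst A) \<and>
     cmp C (snd A) (Tm T (snd A)) = cmp C (snd A) (mu T (fst A))"

definition alg_hom :: "('o,'m) category \<Rightarrow> ('o,'m) monad \<Rightarrow> 'o \<times> 'm \<Rightarrow> 'o \<times> 'm \<Rightarrow> 'm \<Rightarrow> bool" where
  "alg_hom C T A B f \<longleftrightarrow> alg C T A \<and> alg C T B \<and> f \<in> Hom C (fst A) (fst B) \<and>
     cmp C f (snd A) = cmp C (snd B) (Tm T f)"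

definition free_alg :: "('o,'m) monad \<Rightarrow> 'o \<Rightarrow> 'o \<times> 'm" where
  "free_alg T a = (Tob T a, mu T a)"

definition lift :: "('o,'m) category \<Rightarrow> ('o,'m) monoidal \<Rightarrow> ('o \<Rightarrow> 'o \<Rightarrow> 'm) \<Rightarrow>
    'o \<times> 'm \<Rightarrow> 'o \<times> 'm \<Rightarrow> 'o \<times> 'm" where
  "lift C M T2 A B = (tob M (fst A) (fst B), cmp C (tm M (snd A) (snd B)) (T2 (fst A) (fst B)))"

definition unit_data_ok :: "('o,'m) category \<Rightarrow> ('o,'m) monoidal \<Rightarrow> ('o,'m) monoidal \<Rightarrow>
    ('o,'m) monad \<Rightarrow> ('o \<Rightarrow> 'o \<Rightarrow> 'm) \<Rightarrow> 'm \<Rightarrow> ('o \<Rightarrow> 'o \<Rightarrow> 'm) \<Rightarrow> 'm \<Rightarrow>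
    'm \<Rightarrow> 'm \<Rightarrow> 'm \<Rightarrow> bool" where
  "unit_data_ok C Mc Mb T T2c T0c T2b T0b \<nu> \<omega> \<iota> \<longleftrightarrow>
    (let Bot = (unt Mc, T0c); One = (unt Mb, T0b); bt = unt Mc; on = unt Mb in
     \<comment> \<open>nu, varpi, iota are morphisms of T-algebras\<close>
     alg_hom C T Bot (lift C Mb T2b Bot Bot) \<nu> \<and>
     alg_hom C T (lift C Mc T2c One One) One \<omega> \<and>
     alg_hom C T Bot One \<iota> \<and>
     \<comment> \<open>(1, varpi, iota) is a monoid in (D^T, circ, Bot)\<close>
     cmp C \<omega> (tm Mc \<omega> (idm C on)) = cmps C [\<omega>, tm Mc (idm C on) \<omega>, asc Mc on on on] \<and>
     cmp C \<omega> (tm Mc \<iota> (idm C on)) = lu Mc on \<and>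
     cmp C \<omega> (tm Mc (idm C on) \<iota>) = ru Mc on \<and>
     \<comment> \<open>(Bot, nu, iota) is a comonoid in (D^T, bullet, 1)\<close>
     cmps C [asc Mb bt bt bt, tm Mb \<nu> (idm C bt), \<nu>] = cmp C (tm Mb (idm C bt) \<nu>) \<nu> \<and>
     cmps C [lu Mb bt, tm Mb \<iota> (idm C bt), \<nu>] = idm C bt \<and>
     cmps C [ru Mb bt, tm Mb (idm C bt) \<iota>, \<nu>] = idm C bt)"

definition duoidal_on_algebras :: "('o,'m) category \<Rightarrow> ('o,'m) monoidal \<Rightarrow> ('o,'m) monoidal \<Rightarrow>
    ('o,'m) monad \<Rightarrow> ('o \<Rightarrow> 'o \<Rightarrow> 'm) \<Rightarrow> 'm \<Rightarrow> ('o \<Rightarrow> 'o \<Rightarrow> 'm) \<Rightarrow> 'm \<Rightarrow>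
    ('o \<times> 'm \<Rightarrow> 'o \<times> 'm \<Rightarrow> 'o \<times> 'm \<Rightarrow> 'o \<times> 'm \<Rightarrow> 'm) \<Rightarrow> 'm \<Rightarrow> 'm \<Rightarrow> 'm \<Rightarrow> bool" where
  "duoidal_on_algebras C Mc Mb T T2c T0c T2b T0b \<xi> \<nu> \<omega> \<iota> \<longleftrightarrow>
    (let lc = lift C Mc T2c; lb = lift C Mb T2b; Bot = (unt Mc, T0c); One = (unt Mb, T0b);
         oc = tob Mc; ob = tob Mb; mc = tm Mc; mb = tm Mb; I = idm C; ALG = alg C T in
     \<comment> \<open>xi is a family of T-algebra morphisms\<close>
     (\<forall>A B X Y. ALG A \<longrightarrow> ALG B \<longrightarrow> ALG X \<longrightarrow> ALG Y \<longrightarrow>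
        alg_hom C T (lc (lb A B) (lb X Y)) (lb (lc A X) (lc B Y)) (\<xi> A B X Y)) \<and>
     \<comment> \<open>naturality of xi with respect to T-algebra morphisms\<close>
     (\<forall>A A' B B' X X' Y Y' f g h k.
        alg_hom C T A A' f \<longrightarrow> alg_hom C T B B' g \<longrightarrow> alg_hom C T X X' h \<longrightarrow> alg_hom C T Y Y' k \<longrightarrow>
        cmp C (\<xi> A' B' X' Y') (mc (mb f g) (mb h k)) = cmp C (mb (mc f h) (mc g k)) (\<xi> A B X Y)) \<and>
     unit_data_ok C Mc Mb T T2c T0c T2b T0b \<nu> \<omega> \<iota> \<and>
     \<comment> \<open>(A1)\<close>
     (\<forall>X Y A B P Q. ALG X \<longrightarrow> ALG Y \<longrightarrow> ALG A \<longrightarrow> ALG B \<longrightarrow> ALG P \<longrightarrow> ALG Q \<longrightarrow>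
        (let x = fst X; y = fst Y; a = fst A; b = fst B; c = fst P; d = fst Q in
        cmps C [mb (asc Mc x a c) (asc Mc y b d), \<xi> (lc X A) (lc Y B) P Q,
                mc (\<xi> X Y A B) (I (ob c d))] =
        cmps C [\<xi> X Y (lc A P) (lc B Q), mc (I (ob x y)) (\<xi> A B P Q),
                asc Mc (ob x y) (ob a b) (ob c d)])) \<and>
     \<comment> \<open>(A2)\<close>
     (\<forall>X Y A B P Q. ALG X \<longrightarrow> ALG Y \<longrightarrow> ALG A \<longrightarrow> ALG B \<longrightarrow> ALG P \<longrightarrow> ALG Q \<longrightarrow>
        (let x = fst X; y = fst Y; a = fst A; b = fst B; c = fst P; d = fst Q in
        cmps C [asc Mb (oc x y) (oc a b) (oc c d), mb (\<xi> X A Y B) (I (oc c d)),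
                \<xi> (lb X A) P (lb Y B) Q] =
        cmps C [mb (I (oc x y)) (\<xi> A P B Q), \<xi> X (lb A P) Y (lb B Q),
                mc (asc Mb x a c) (asc Mb y b d)])) \<and>
     \<comment> \<open>(U)\<close>
     (\<forall>A B. ALG A \<longrightarrow> ALG B \<longrightarrow>
        (let a = fst A; b = fst B in
        cmp C (\<xi> Bot Bot A B) (mc \<nu> (I (ob a b))) =
          cmp C (mb (invm C (oc (unt Mc) a) a (lu Mc a)) (invm C (oc (unt Mc) b) b (lu Mc b)))
                (lu Mc (ob a b)) \<and>
        cmp C (\<xi> A B Bot Bot) (mc (I (ob a b)) \<nu>) =
          cmp C (mb (invm C (oc a (unt Mc)) a (ru Mc a)) (invm C (oc b (unt Mc)) b (ru Mc b)))
                (ru Mc (ob a b)) \<and>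
        cmp C (mb \<omega> (I (oc a b))) (\<xi> One A One B) =
          cmp C (invm C (ob (unt Mb) (oc a b)) (oc a b) (lu Mb (oc a b)))
                (mc (lu Mb a) (lu Mb b)) \<and>
        cmp C (mb (I (oc a b)) \<omega>) (\<xi> A One B One) =
          cmp C (invm C (ob (oc a b) (unt Mb)) (oc a b) (ru Mb (oc a b)))
                (mc (ru Mb a) (ru Mb b)))))"

definition r_matrix :: "('o,'m) category \<Rightarrow> ('o,'m) monoidal \<Rightarrow> ('o,'m) monoidal \<Rightarrow>
    ('o,'m) monad \<Rightarrow> ('o \<Rightarrow> 'o \<Rightarrow> 'm) \<Rightarrow> 'm \<Rightarrow> ('o \<Rightarrow> 'o \<Rightarrow> 'm) \<Rightarrow> 'm \<Rightarrow>
    ('o \<Rightarrow> 'o \<Rightarrow> 'o \<Rightarrow> 'o \<Rightarrow> 'm) \<Rightarrow> 'm \<Rightarrow> 'm \<Rightarrow> 'm \<Rightarrow> bool" where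
  "r_matrix C Mc Mb T T2c T0c T2b T0b R \<nu> \<omega> \<iota> \<longleftrightarrow>
    (let oc = tob Mc; ob = tob Mb; mc = tm Mc; mb = tm Mb; I = idm C; ALG = alg C T;
         T' = Tob T; Tf = Tm T; \<mu> = mu T; bt = unt Mc; on = unt Mb in
     \<comment> \<open>R is a natural transformation\<close>
     (\<forall>a\<in>Obj C. \<forall>b\<in>Obj C. \<forall>c\<in>Obj C. \<forall>d\<in>Obj C.
        R a b c d \<in> Hom C (oc (ob a b) (ob c d)) (ob (oc (T' a) (T' c)) (oc (T' b) (T' d)))) \<and>
     (\<forall>a a' b b' c c' d d' f g h k.
        f \<in> Hom C a a' \<longrightarrow> g \<in> Hom C b b' \<longrightarrow> h \<in> Hom C c c' \<longrightarrow> k \<in> Hom C d d' \<longrightarrow>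
        cmp C (R a' b' c' d') (mc (mb f g) (mb h k)) =
        cmp C (mb (mc (Tf f) (Tf h)) (mc (Tf g) (Tf k))) (R a b c d)) \<and>
     \<comment> \<open>nu, varpi, iota: T-algebra morphisms, monoid and comonoid\<close>
     unit_data_ok C Mc Mb T T2c T0c T2b T0b \<nu> \<omega> \<iota> \<and>
     \<comment> \<open>(R-unit)\<close>
     (\<forall>A B. ALG A \<longrightarrow> ALG B \<longrightarrow>
        (let a = fst A; b = fst B; \<alpha> = snd A; \<beta> = snd B in
        cmps C [mb (mc T0c \<alpha>) (mc T0c \<beta>), R bt bt a b, mc \<nu> (I (ob a b))] =
          cmp C (mb (invm C (oc bt a) a (lu Mc a)) (invm C (oc bt b) b (lu Mc b)))
                (lu Mc (ob a b)) \<and>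
        cmps C [mb (mc \<alpha> T0c) (mc \<beta> T0c), R a b bt bt, mc (I (ob a b)) \<nu>] =
          cmp C (mb (invm C (oc a bt) a (ru Mc a)) (invm C (oc b bt) b (ru Mc b)))
                (ru Mc (ob a b)) \<and>
        cmps C [mb \<omega> (I (oc a b)), mb (mc T0b T0b) (mc \<alpha> \<beta>), R on a on b] =
          cmp C (invm C (ob on (oc a b)) (oc a b) (lu Mb (oc a b)))
                (mc (lu Mb a) (lu Mb b)) \<and>
        cmps C [mb (I (oc a b)) \<omega>, mb (mc \<alpha> \<beta>) (mc T0b T0b), R a on b on] =
          cmp C (invm C (ob (oc a b) on) (oc a b) (ru Mb (oc a b)))
                (mc (ru Mb a) (ru Mb b)))) \<and>
     \<comment> \<open>(R-lift)\<close>
     (\<forall>a\<in>Obj C. \<forall>b\<in>Obj C. \<forall>c\<in>Obj C. \<forall>d\<in>Obj C.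
        cmps C [mb (mc (\<mu> a) (\<mu> c)) (mc (\<mu> b) (\<mu> d)), R (T' a) (T' b) (T' c) (T' d),
                mc (T2b a b) (T2b c d), T2c (ob a b) (ob c d)] =
        cmps C [mb (mc (\<mu> a) (\<mu> c)) (mc (\<mu> b) (\<mu> d)),
                mb (T2c (T' a) (T' c)) (T2c (T' b) (T' d)),
                T2b (oc (T' a) (T' c)) (oc (T' b) (T' d)), Tf (R a b c d)]) \<and>
     \<comment> \<open>(R-1), with the suppressed associators made explicit\<close>
     (\<forall>a\<in>Obj C. \<forall>b\<in>Obj C. \<forall>c\<in>Obj C. \<forall>d\<in>Obj C. \<forall>x\<in>Obj C. \<forall>y\<in>Obj C.
        cmps C [mb (asc Mc (T' a) (T' c) (T' x)) (asc Mc (T' b) (T' d) (T' y)),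
                mb (mc (mc (\<mu> a) (\<mu> c)) (I (T' x))) (mc (mc (\<mu> b) (\<mu> d)) (I (T' y))),
                mb (mc (T2c (T' a) (T' c)) (I (T' x))) (mc (T2c (T' b) (T' d)) (I (T' y))),
                R (oc (T' a) (T' c)) (oc (T' b) (T' d)) x y,
                mc (R a b c d) (I (ob x y))] =
        cmps C [mb (mc (I (T' a)) (mc (\<mu> c) (\<mu> x))) (mc (I (T' b)) (mc (\<mu> d) (\<mu> y))),
                mb (mc (I (T' a)) (T2c (T' c) (T' x))) (mc (I (T' b)) (T2c (T' d) (T' y))),
                R a b (oc (T' c) (T' x)) (oc (T' d) (T' y)),
                mc (I (ob a b)) (R c d x y),
                asc Mc (ob a b) (ob c d) (ob x y)]) \<and>
     \<comment> \<open>(R-2), with the suppressed associator made explicit\<close>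
     (\<forall>x\<in>Obj C. \<forall>a\<in>Obj C. \<forall>c\<in>Obj C. \<forall>y\<in>Obj C. \<forall>b\<in>Obj C. \<forall>d\<in>Obj C.
        cmps C [asc Mb (oc (T' x) (T' y)) (oc (T' a) (T' b)) (oc (T' c) (T' d)),
                mb (mb (mc (\<mu> x) (\<mu> y)) (mc (\<mu> a) (\<mu> b))) (I (oc (T' c) (T' d))),
                mb (R (T' x) (T' a) (T' y) (T' b)) (I (oc (T' c) (T' d))),
                mb (mc (T2b x a) (T2b y b)) (I (oc (T' c) (T' d))),
                R (ob x a) c (ob y b) d] =
        cmps C [mb (I (oc (T' x) (T' y))) (mb (mc (\<mu> a) (\<mu> b)) (mc (\<mu> c) (\<mu> d))),
                mb (I (oc (T' x) (T' y))) (R (T' a) (T' c) (T' b) (T' d)),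
                mb (I (oc (T' x) (T' y))) (mc (T2b a c) (T2b b d)),
                R x (ob a c) y (ob b d),
                mc (asc Mb x a c) (asc Mb y b d)]))"

end

theory Submission
  imports Defs
begin


lemma cat_0_q: "category C \<Longrightarrow> (\<forall>a b f. f \<in> Hom C a b \<longrightarrow> a \<in> Obj C \<and> b \<in> Obj C)"
  unfolding category_def by (elim conjE) assumption
lemmas cat_0 = cat_0_q[rule_format]
lemma cat_1_q: "category C \<Longrightarrow> (\<forall>a\<in>Obj C. idm C a \<in> Hom C a a)"
  unfolding category_def by (elim conjE) assumption
lemmas cat_1 = cat_1_q[rule_format]
lemma cat_2_q: "category C \<Longrightarrow> (\<forall>a b c f g. f \<in> Hom C a b \<longrightarrow> g \<in> Hom C b c \<longrightarrow> cmp C g f \<in> Hom C a c)"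
  unfolding category_def by (elim conjE) assumption
lemmas cat_2 = cat_2_q[rule_format]
lemma cat_3_q: "category C \<Longrightarrow> (\<forall>a b f. f \<in> Hom C a b \<longrightarrow> cmp C (idm C b) f = f \<and> cmp C f (idm C a) = f)"
  unfolding category_def by (elim conjE) assumption
lemmas cat_3 = cat_3_q[rule_format]
lemma cat_4_q: "category C \<Longrightarrow> (\<forall>a b c d f g h. f \<in> Hom C a b \<longrightarrow> g \<in> Hom C b c \<longrightarrow> h \<in> Hom C c d \<longrightarrow>
        cmp C h (cmp C g f) = cmp C (cmp C h g) f)"
  unfolding category_def by (elim conjE) assumption
lemmas cat_4 = cat_4_q[rule_format]
lemma mon_0_q: "monoidal_cat C M \<Longrightarrow> category C"
  unfolding monoidal_cat_def by (elim conjE) assumption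
lemmas mon_0 = mon_0_q[rule_format]
lemma mon_1_q: "monoidal_cat C M \<Longrightarrow> unt M \<in> Obj C"
  unfolding monoidal_cat_def by (elim conjE) assumption
lemmas mon_1 = mon_1_q[rule_format]
lemma mon_2_q: "monoidal_cat C M \<Longrightarrow> (\<forall>a\<in>Obj C. \<forall>b\<in>Obj C. tob M a b \<in> Obj C)"
  unfolding monoidal_cat_def by (elim conjE) assumption
lemmas mon_2 = mon_2_q[rule_format]
lemma mon_3_q: "monoidal_cat C M \<Longrightarrow> (\<forall>a b c d f g. f \<in> Hom C a b \<longrightarrow> g \<in> Hom C c d \<longrightarrow>
        tm M f g \<in> Hom C (tob M a c) (tob M b d))"
  unfolding monoidal_cat_def by (elim conjE) assumption
lemmas mon_3 = mon_3_q[rule_format]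
lemma mon_4_q: "monoidal_cat C M \<Longrightarrow> (\<forall>a\<in>Obj C. \<forall>b\<in>Obj C. tm M (idm C a) (idm C b) = idm C (tob M a b))"
  unfolding monoidal_cat_def by (elim conjE) assumption
lemmas mon_4 = mon_4_q[rule_format]
lemma mon_5_q: "monoidal_cat C M \<Longrightarrow> (\<forall>a b c a' b' c' f f' g g'. f \<in> Hom C a b \<longrightarrow> f' \<in> Hom C b c \<longrightarrow>
        g \<in> Hom C a' b' \<longrightarrow> g' \<in> Hom C b' c' \<longrightarrow>
        tm M (cmp C f' f) (cmp C g' g) = cmp C (tm M f' g') (tm M f g))"
  unfolding monoidal_cat_def by (elim conjE) assumption
lemmas mon_5 = mon_5_q[rule_format]
lemma mon_6_q: "monoidal_cat C M \<Longrightarrow> (\<forall>a\<in>Obj C. \<forall>b\<in>Obj C. \<forall>c\<in>Obj C.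
        iso C (tob M (tob M a b) c) (tob M a (tob M b c)) (asc M a b c))"
  unfolding monoidal_cat_def by (elim conjE) assumption
lemmas mon_6 = mon_6_q[rule_format]
lemma mon_7_q: "monoidal_cat C M \<Longrightarrow> (\<forall>a b c a' b' c' f g h. f \<in> Hom C a a' \<longrightarrow> g \<in> Hom C b b' \<longrightarrow> h \<in> Hom C c c' \<longrightarrow>
        cmp C (asc M a' b' c') (tm M (tm M f g) h) = cmp C (tm M f (tm M g h)) (asc M a b c))"
  unfolding monoidal_cat_def by (elim conjE) assumption
lemmas mon_7 = mon_7_q[rule_format]
lemma mon_8_q: "monoidal_cat C M \<Longrightarrow> (\<forall>a\<in>Obj C. iso C (tob M (unt M) a) a (lu M a))"
  unfolding monoidal_cat_def by (elim conjE) assumption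
lemmas mon_8 = mon_8_q[rule_format]
lemma mon_9_q: "monoidal_cat C M \<Longrightarrow> (\<forall>a b f. f \<in> Hom C a b \<longrightarrow>
        cmp C (lu M b) (tm M (idm C (unt M)) f) = cmp C f (lu M a))"
  unfolding monoidal_cat_def by (elim conjE) assumption
lemmas mon_9 = mon_9_q[rule_format]
lemma mon_10_q: "monoidal_cat C M \<Longrightarrow> (\<forall>a\<in>Obj C. iso C (tob M a (unt M)) a (ru M a))"
  unfolding monoidal_cat_def by (elim conjE) assumption
lemmas mon_10 = mon_10_q[rule_format]
lemma mon_11_q: "monoidal_cat C M \<Longrightarrow> (\<forall>a b f. f \<in> Hom C a b \<longrightarrow>
        cmp C (ru M b) (tm M f (idm C (unt M))) = cmp C f (ru M a))"
  unfolding monoidal_cat_def by (elim conjE) assumption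
lemmas mon_11 = mon_11_q[rule_format]
lemma mon_12_q: "monoidal_cat C M \<Longrightarrow> (\<forall>a\<in>Obj C. \<forall>b\<in>Obj C. \<forall>c\<in>Obj C. \<forall>d\<in>Obj C.
        cmps C [asc M a b (tob M c d), asc M (tob M a b) c d] =
        cmps C [tm M (idm C a) (asc M b c d), asc M a (tob M b c) d, tm M (asc M a b c) (idm C d)])"
  unfolding monoidal_cat_def by (elim conjE) assumption
lemmas mon_12 = mon_12_q[rule_format]
lemma mon_13_q: "monoidal_cat C M \<Longrightarrow> (\<forall>a\<in>Obj C. \<forall>b\<in>Obj C.
        cmp C (tm M (idm C a) (lu M b)) (asc M a (unt M) b) = tm M (ru M a) (idm C b))"
  unfolding monoidal_cat_def by (elim conjE) assumption
lemmas mon_13 = mon_13_q[rule_format]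
lemma mnd_0_q: "monad C T \<Longrightarrow> category C"
  unfolding monad_def by (elim conjE) assumption
lemmas mnd_0 = mnd_0_q[rule_format]
lemma mnd_1_q: "monad C T \<Longrightarrow> (\<forall>a\<in>Obj C. Tob T a \<in> Obj C)"
  unfolding monad_def by (elim conjE) assumption
lemmas mnd_1 = mnd_1_q[rule_format]
lemma mnd_2_q: "monad C T \<Longrightarrow> (\<forall>a b f. f \<in> Hom C a b \<longrightarrow> Tm T f \<in> Hom C (Tob T a) (Tob T b))"
  unfolding monad_def by (elim conjE) assumption
lemmas mnd_2 = mnd_2_q[rule_format]
lemma mnd_3_q: "monad C T \<Longrightarrow> (\<forall>a\<in>Obj C. Tm T (idm C a) = idm C (Tob T a))"
  unfolding monad_def by (elim conjE) assumption
lemmas mnd_3 = mnd_3_q[rule_format]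
lemma mnd_4_q: "monad C T \<Longrightarrow> (\<forall>a b c f g. f \<in> Hom C a b \<longrightarrow> g \<in> Hom C b c \<longrightarrow>
        Tm T (cmp C g f) = cmp C (Tm T g) (Tm T f))"
  unfolding monad_def by (elim conjE) assumption
lemmas mnd_4 = mnd_4_q[rule_format]
lemma mnd_5_q: "monad C T \<Longrightarrow> (\<forall>a\<in>Obj C. mu T a \<in> Hom C (Tob T (Tob T a)) (Tob T a))"
  unfolding monad_def by (elim conjE) assumption
lemmas mnd_5 = mnd_5_q[rule_format]
lemma mnd_6_q: "monad C T \<Longrightarrow> (\<forall>a\<in>Obj C. eta T a \<in> Hom C a (Tob T a))"
  unfolding monad_def by (elim conjE) assumption
lemmas mnd_6 = mnd_6_q[rule_format]
lemma mnd_7_q: "monad C T \<Longrightarrow> (\<forall>a b f. f \<in> Hom C a b \<longrightarrow> cmp C (mu T b) (Tm T (Tm T f)) = cmp C (Tm T f) (mu T a))"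
  unfolding monad_def by (elim conjE) assumption
lemmas mnd_7 = mnd_7_q[rule_format]
lemma mnd_8_q: "monad C T \<Longrightarrow> (\<forall>a b f. f \<in> Hom C a b \<longrightarrow> cmp C (eta T b) f = cmp C (Tm T f) (eta T a))"
  unfolding monad_def by (elim conjE) assumption
lemmas mnd_8 = mnd_8_q[rule_format]
lemma mnd_9_q: "monad C T \<Longrightarrow> (\<forall>a\<in>Obj C. cmp C (mu T a) (Tm T (mu T a)) = cmp C (mu T a) (mu T (Tob T a)))"
  unfolding monad_def by (elim conjE) assumption
lemmas mnd_9 = mnd_9_q[rule_format]
lemma mnd_10_q: "monad C T \<Longrightarrow> (\<forall>a\<in>Obj C. cmp C (mu T a) (eta T (Tob T a)) = idm C (Tob T a))"
  unfolding monad_def by (elim conjE) assumption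
lemmas mnd_10 = mnd_10_q[rule_format]
lemma mnd_11_q: "monad C T \<Longrightarrow> (\<forall>a\<in>Obj C. cmp C (mu T a) (Tm T (eta T a)) = idm C (Tob T a))"
  unfolding monad_def by (elim conjE) assumption
lemmas mnd_11 = mnd_11_q[rule_format]
lemma bim_0_q: "bimonad C M T T2 T0 \<Longrightarrow> monoidal_cat C M"
  unfolding bimonad_def by (elim conjE) assumption
lemmas bim_0 = bim_0_q[rule_format]
lemma bim_1_q: "bimonad C M T T2 T0 \<Longrightarrow> monad C T"
  unfolding bimonad_def by (elim conjE) assumption
lemmas bim_1 = bim_1_q[rule_format]
lemma bim_2_q: "bimonad C M T T2 T0 \<Longrightarrow> (\<forall>x\<in>Obj C. \<forall>y\<in>Obj C.
       T2 x y \<in> Hom C (Tob T (tob M x y)) (tob M (Tob T x) (Tob T y)))"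
  unfolding bimonad_def by (elim conjE) assumption
lemmas bim_2 = bim_2_q[rule_format]
lemma bim_3_q: "bimonad C M T T2 T0 \<Longrightarrow> T0 \<in> Hom C (Tob T (unt M)) (unt M)"
  unfolding bimonad_def by (elim conjE) assumption
lemmas bim_3 = bim_3_q[rule_format]
lemma bim_4_q: "bimonad C M T T2 T0 \<Longrightarrow> (\<forall>x x' y y' f g. f \<in> Hom C x x' \<longrightarrow> g \<in> Hom C y y' \<longrightarrow>
       cmp C (T2 x' y') (Tm T (tm M f g)) = cmp C (tm M (Tm T f) (Tm T g)) (T2 x y))"
  unfolding bimonad_def by (elim conjE) assumption
lemmas bim_4 = bim_4_q[rule_format]
lemma bim_5_q: "bimonad C M T T2 T0 \<Longrightarrow> (\<forall>x\<in>Obj C. \<forall>y\<in>Obj C. \<forall>z\<in>Obj C.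
       cmps C [asc M (Tob T x) (Tob T y) (Tob T z), tm M (T2 x y) (idm C (Tob T z)),
               T2 (tob M x y) z] =
       cmps C [tm M (idm C (Tob T x)) (T2 y z), T2 x (tob M y z), Tm T (asc M x y z)])"
  unfolding bimonad_def by (elim conjE) assumption
lemmas bim_5 = bim_5_q[rule_format]
lemma bim_6_q: "bimonad C M T T2 T0 \<Longrightarrow> (\<forall>x\<in>Obj C. cmps C [lu M (Tob T x), tm M T0 (idm C (Tob T x)), T2 (unt M) x]
                 = Tm T (lu M x))"
  unfolding bimonad_def by (elim conjE) assumption
lemmas bim_6 = bim_6_q[rule_format]
lemma bim_7_q: "bimonad C M T T2 T0 \<Longrightarrow> (\<forall>x\<in>Obj C. cmps C [ru M (Tob T x), tm M (idm C (Tob T x)) T0, T2 x (unt M)]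
                 = Tm T (ru M x))"
  unfolding bimonad_def by (elim conjE) assumption
lemmas bim_7 = bim_7_q[rule_format]
lemma bim_8_q: "bimonad C M T T2 T0 \<Longrightarrow> (\<forall>x\<in>Obj C. \<forall>y\<in>Obj C.
       cmp C (T2 x y) (mu T (tob M x y)) =
       cmps C [tm M (mu T x) (mu T y), T2 (Tob T x) (Tob T y), Tm T (T2 x y)])"
  unfolding bimonad_def by (elim conjE) assumption
lemmas bim_8 = bim_8_q[rule_format]
lemma bim_9_q: "bimonad C M T T2 T0 \<Longrightarrow> cmp C T0 (mu T (unt M)) = cmp C T0 (Tm T T0)"
  unfolding bimonad_def by (elim conjE) assumption
lemmas bim_9 = bim_9_q[rule_format]
lemma bim_10_q: "bimonad C M T T2 T0 \<Longrightarrow> (\<forall>x\<in>Obj C. \<forall>y\<in>Obj C.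
       cmp C (T2 x y) (eta T (tob M x y)) = tm M (eta T x) (eta T y))"
  unfolding bimonad_def by (elim conjE) assumption
lemmas bim_10 = bim_10_q[rule_format]
lemma bim_11_q: "bimonad C M T T2 T0 \<Longrightarrow> cmp C T0 (eta T (unt M)) = idm C (unt M)"
  unfolding bimonad_def by (elim conjE) assumption
lemmas bim_11 = bim_11_q[rule_format]


lemmas cat_idl = cat_3[THEN conjunct1] and cat_idr = cat_3[THEN conjunct2]

locale bictx =
  fixes C :: "('o,'m) category" and M :: "('o,'m) monoidal" and T :: "('o,'m) monad"
    and T2 :: "'o \<Rightarrow> 'o \<Rightarrow> 'm" and T0 :: 'm
  assumes B: "bimonad C M T T2 T0"
begin

lemma mM: "monoidal_cat C M" using B by (rule bim_0)
lemma mT: "monad C T" using B by (rule bim_1)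
lemma cC: "category C" using mM by (rule mon_0)

lemma o_t: "a \<in> Obj C \<Longrightarrow> b \<in> Obj C \<Longrightarrow> tob M a b \<in> Obj C" by (rule mon_2[OF mM])
lemma o_u: "unt M \<in> Obj C" by (rule mon_1[OF mM])
lemma o_T: "a \<in> Obj C \<Longrightarrow> Tob T a \<in> Obj C" by (rule mnd_1[OF mT])
lemma h_id: "a \<in> Obj C \<Longrightarrow> idm C a \<in> Hom C a a" by (rule cat_1[OF cC])
lemma h_cp: "f \<in> Hom C a b \<Longrightarrow> g \<in> Hom C b c \<Longrightarrow> cmp C g f \<in> Hom C a c" by (rule cat_2[OF cC])
lemma h_tm: "f \<in> Hom C a b \<Longrightarrow> g \<in> Hom C c d \<Longrightarrow> tm M f g \<in> Hom C (tob M a c) (tob M b d)" by (rule mon_3[OF mM])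
lemma h_Tf: "f \<in> Hom C a b \<Longrightarrow> Tm T f \<in> Hom C (Tob T a) (Tob T b)" by (rule mnd_2[OF mT])
lemma h_mu: "a \<in> Obj C \<Longrightarrow> mu T a \<in> Hom C (Tob T (Tob T a)) (Tob T a)" by (rule mnd_5[OF mT])
lemma h_eta: "a \<in> Obj C \<Longrightarrow> eta T a \<in> Hom C a (Tob T a)" by (rule mnd_6[OF mT])
lemma h_T2: "x \<in> Obj C \<Longrightarrow> y \<in> Obj C \<Longrightarrow> T2 x y \<in> Hom C (Tob T (tob M x y)) (tob M (Tob T x) (Tob T y))" by (rule bim_2[OF B])
lemma h_T0: "T0 \<in> Hom C (Tob T (unt M)) (unt M)" by (rule bim_3[OF B])
lemma h_asc: "a \<in> Obj C \<Longrightarrow> b \<in> Obj C \<Longrightarrow> c \<in> Obj C \<Longrightarrow> asc M a b c \<in> Hom C (tob M (tob M a b) c) (tob M a (tob M b c))"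
  using mon_6[OF mM] unfolding iso_def by blast

lemma alg_obj: "alg C T A \<Longrightarrow> fst A \<in> Obj C" unfolding alg_def by blast
lemma alg_str: "alg C T A \<Longrightarrow> snd A \<in> Hom C (Tob T (fst A)) (fst A)" unfolding alg_def by blast
lemma alg_unit: "alg C T A \<Longrightarrow> cmp C (snd A) (eta T (fst A)) = idm C (fst A)" unfolding alg_def by blast
lemma alg_mult: "alg C T A \<Longrightarrow> cmp C (snd A) (Tm T (snd A)) = cmp C (snd A) (mu T (fst A))" unfolding alg_def by blast

lemmas ty = o_t o_u o_T h_id h_cp h_tm h_Tf h_mu h_eta h_T2 h_T0 h_asc alg_obj alg_str

lemmas assoc = cat_4[OF cC]
lemmas idl = cat_idl[OF cC] and idr = cat_idr[OF cC]
lemmas tmc = mon_5[OF mM]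

lemma alg_lift:
  assumes A: "alg C T A" and Bq: "alg C T Bq"
  shows "alg C T (lift C M T2 A Bq)"
proof -
  let ?a = "fst A" and ?b = "fst Bq" and ?\<alpha> = "snd A" and ?\<beta> = "snd Bq"
  note t = A Bq
  have "cmp C (cmp C (tm M ?\<alpha> ?\<beta>) (T2 ?a ?b)) (eta T (tob M ?a ?b))
      = cmp C (tm M ?\<alpha> ?\<beta>) (cmp C (T2 ?a ?b) (eta T (tob M ?a ?b)))"
    by (rule assoc[symmetric]; blast intro: ty t)
  also have "\<dots> = cmp C (tm M ?\<alpha> ?\<beta>) (tm M (eta T ?a) (eta T ?b))"
    using bim_10[OF B] t by (simp add: alg_obj)
  also have "\<dots> = tm M (cmp C ?\<alpha> (eta T ?a)) (cmp C ?\<beta> (eta T ?b))"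
    by (rule tmc[symmetric]; blast intro: ty t)
  also have "\<dots> = idm C (tob M ?a ?b)"
    using t by (simp add: alg_unit alg_obj mon_4[OF mM])
  finally have u: "cmp C (cmp C (tm M ?\<alpha> ?\<beta>) (T2 ?a ?b)) (eta T (tob M ?a ?b)) = idm C (tob M ?a ?b)" .
  have "cmp C (cmp C (tm M ?\<alpha> ?\<beta>) (T2 ?a ?b)) (Tm T (cmp C (tm M ?\<alpha> ?\<beta>) (T2 ?a ?b)))
      = cmp C (cmp C (tm M ?\<alpha> ?\<beta>) (T2 ?a ?b)) (cmp C (Tm T (tm M ?\<alpha> ?\<beta>)) (Tm T (T2 ?a ?b)))"
    by (subst mnd_4[OF mT]; blast intro: ty t)
  also have "\<dots> = cmp C (tm M ?\<alpha> ?\<beta>) (cmp C (T2 ?a ?b) (cmp C (Tm T (tm M ?\<alpha> ?\<beta>)) (Tm T (T2 ?a ?b))))"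
    by (rule assoc[symmetric]; blast intro: ty t)
  also have "\<dots> = cmp C (tm M ?\<alpha> ?\<beta>) (cmp C (cmp C (T2 ?a ?b) (Tm T (tm M ?\<alpha> ?\<beta>))) (Tm T (T2 ?a ?b)))"
    by (subst assoc; blast intro: ty t)
  also have "\<dots> = cmp C (tm M ?\<alpha> ?\<beta>) (cmp C (cmp C (tm M (Tm T ?\<alpha>) (Tm T ?\<beta>)) (T2 (Tob T ?a) (Tob T ?b))) (Tm T (T2 ?a ?b)))"
    by (subst bim_4[OF B]; blast intro: ty t)
  also have "\<dots> = cmp C (cmp C (tm M ?\<alpha> ?\<beta>) (tm M (Tm T ?\<alpha>) (Tm T ?\<beta>))) (cmp C (T2 (Tob T ?a) (Tob T ?b)) (Tm T (T2 ?a ?b)))"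
    by (subst assoc[symmetric], (blast intro: ty t)+, rule assoc; blast intro: ty t)
  also have "\<dots> = cmp C (tm M (cmp C ?\<alpha> (Tm T ?\<alpha>)) (cmp C ?\<beta> (Tm T ?\<beta>))) (cmp C (T2 (Tob T ?a) (Tob T ?b)) (Tm T (T2 ?a ?b)))"
    by (subst tmc; blast intro: ty t)
  also have "\<dots> = cmp C (tm M (cmp C ?\<alpha> (mu T ?a)) (cmp C ?\<beta> (mu T ?b))) (cmp C (T2 (Tob T ?a) (Tob T ?b)) (Tm T (T2 ?a ?b)))"
    using t by (simp add: alg_mult)
  also have "\<dots> = cmp C (cmp C (tm M ?\<alpha> ?\<beta>) (tm M (mu T ?a) (mu T ?b))) (cmp C (T2 (Tob T ?a) (Tob T ?b)) (Tm T (T2 ?a ?b)))"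
    by (subst tmc; blast intro: ty t)
  also have "\<dots> = cmp C (tm M ?\<alpha> ?\<beta>) (cmps C [tm M (mu T ?a) (mu T ?b), T2 (Tob T ?a) (Tob T ?b), Tm T (T2 ?a ?b)])"
    by (simp, rule assoc[symmetric]; blast intro: ty t)
  also have "\<dots> = cmp C (tm M ?\<alpha> ?\<beta>) (cmp C (T2 ?a ?b) (mu T (tob M ?a ?b)))"
    using t by (simp add: bim_8[OF B] alg_obj)
  also have "\<dots> = cmp C (cmp C (tm M ?\<alpha> ?\<beta>) (T2 ?a ?b)) (mu T (tob M ?a ?b))"
    by (rule assoc; blast intro: ty t)
  finally have m: "cmp C (cmp C (tm M ?\<alpha> ?\<beta>) (T2 ?a ?b)) (Tm T (cmp C (tm M ?\<alpha> ?\<beta>) (T2 ?a ?b)))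
      = cmp C (cmp C (tm M ?\<alpha> ?\<beta>) (T2 ?a ?b)) (mu T (tob M ?a ?b))" .
  show ?thesis unfolding alg_def lift_def using u m t by (auto intro: ty)
qed

lemma free_alg: "a \<in> Obj C \<Longrightarrow> alg C T (free_alg T a)"
  unfolding alg_def free_alg_def using mnd_9[OF mT] mnd_10[OF mT] by (auto intro: ty)

lemma ah_str: assumes A: "alg C T A" shows "alg_hom C T (free_alg T (fst A)) A (snd A)"
  unfolding alg_hom_def using A free_alg[OF alg_obj[OF A]] alg_mult[OF A] alg_str[OF A]
  by (simp add: free_alg_def)

lemma ah_Tf: assumes f: "f \<in> Hom C a b" shows "alg_hom C T (free_alg T a) (free_alg T b) (Tm T f)"
  unfolding alg_hom_def using free_alg cat_0[OF cC f] f mnd_7[OF mT f]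
  by (auto simp: free_alg_def intro: ty)

lemma ah_id: assumes a: "a \<in> Obj C" shows "alg_hom C T (free_alg T a) (free_alg T a) (idm C (Tob T a))"
  using ah_Tf[OF h_id[OF a]] mnd_3[OF mT a] by simp

lemma ah_mu: assumes a: "a \<in> Obj C" shows "alg_hom C T (free_alg T (Tob T a)) (free_alg T a) (mu T a)"
  unfolding alg_hom_def using free_alg a mnd_9[OF mT a]
  by (auto simp: free_alg_def intro: ty)

lemma ah_T2: assumes x: "x \<in> Obj C" and y: "y \<in> Obj C"
  shows "alg_hom C T (free_alg T (tob M x y)) (lift C M T2 (free_alg T x) (free_alg T y)) (T2 x y)"
proof -
  have "cmp C (T2 x y) (mu T (tob M x y)) = cmps C [tm M (mu T x) (mu T y), T2 (Tob T x) (Tob T y), Tm T (T2 x y)]"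
    by (rule bim_8[OF B x y])
  also have "\<dots> = cmp C (cmp C (tm M (mu T x) (mu T y)) (T2 (Tob T x) (Tob T y))) (Tm T (T2 x y))"
    by (simp, rule assoc; blast intro: ty x y)
  finally have "cmp C (T2 x y) (mu T (tob M x y)) = cmp C (cmp C (tm M (mu T x) (mu T y)) (T2 (Tob T x) (Tob T y))) (Tm T (T2 x y))" .
  then show ?thesis unfolding alg_hom_def using free_alg alg_lift free_alg x y
    by (auto simp: free_alg_def lift_def intro: ty)
qed

lemma P_lemma: assumes a: "a \<in> Obj C" and b: "b \<in> Obj C"
  shows "cmp C (cmp C (tm M (mu T a) (mu T b)) (T2 (Tob T a) (Tob T b))) (Tm T (tm M (eta T a) (eta T b))) = T2 a b"
proof -
  note tt = a b
  have "cmp C (cmp C (tm M (mu T a) (mu T b)) (T2 (Tob T a) (Tob T b))) (Tm T (tm M (eta T a) (eta T b)))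
      = cmp C (tm M (mu T a) (mu T b)) (cmp C (T2 (Tob T a) (Tob T b)) (Tm T (tm M (eta T a) (eta T b))))"
    by (rule assoc[symmetric]; blast intro: ty tt)
  also have "\<dots> = cmp C (tm M (mu T a) (mu T b)) (cmp C (tm M (Tm T (eta T a)) (Tm T (eta T b))) (T2 a b))"
    by (subst bim_4[OF B]; blast intro: ty tt)
  also have "\<dots> = cmp C (cmp C (tm M (mu T a) (mu T b)) (tm M (Tm T (eta T a)) (Tm T (eta T b)))) (T2 a b)"
    by (rule assoc; blast intro: ty tt)
  also have "\<dots> = cmp C (tm M (cmp C (mu T a) (Tm T (eta T a))) (cmp C (mu T b) (Tm T (eta T b)))) (T2 a b)"
    by (subst tmc; blast intro: ty tt)
  also have "\<dots> = cmp C (idm C (tob M (Tob T a) (Tob T b))) (T2 a b)"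
    using tt by (simp add: mnd_11[OF mT] mon_4[OF mM] o_T)
  also have "\<dots> = T2 a b" by (rule idl; blast intro: ty tt)
  finally show ?thesis .
qed

end

lemma algoI: "alg C T A \<Longrightarrow> fst A = a \<Longrightarrow> True" by simp

locale ctx =
  fixes C :: "('o,'m) category" and Mc Mb :: "('o,'m) monoidal" and T :: "('o,'m) monad"
    and T2c T2b :: "'o \<Rightarrow> 'o \<Rightarrow> 'm" and T0c T0b :: 'm
    and \<xi> :: "'o \<times> 'm \<Rightarrow> 'o \<times> 'm \<Rightarrow> 'o \<times> 'm \<Rightarrow> 'o \<times> 'm \<Rightarrow> 'm"
    and \<nu> \<omega> \<iota> :: 'm
  assumes S: "sep_opmonoidal_monad C Mc Mb T T2c T0c T2b T0b"
    and D: "duoidal_on_algebras C Mc Mb T T2c T0c T2b T0b \<xi> \<nu> \<omega> \<iota>"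
begin

lemma bc: "bimonad C Mc T T2c T0c" using S unfolding sep_opmonoidal_monad_def by blast
lemma bb: "bimonad C Mb T T2b T0b" using S unfolding sep_opmonoidal_monad_def by blast

sublocale Bc: bictx C Mc T T2c T0c by (rule bictx.intro, rule bc)
sublocale Bb: bictx C Mb T T2b T0b by (rule bictx.intro, rule bb)

abbreviation "cp \<equiv> cmp C"
abbreviation "tc \<equiv> tm Mc"
abbreviation "tb \<equiv> tm Mb"
abbreviation "oc \<equiv> tob Mc"
abbreviation "ob \<equiv> tob Mb"
abbreviation "I \<equiv> idm C"
abbreviation "T' \<equiv> Tob T"
abbreviation "Tf \<equiv> Tm T"
abbreviation "et \<equiv> eta T"
abbreviation "mm \<equiv> mu T"
abbreviation "F \<equiv> free_alg T"
abbreviation "lc \<equiv> lift C Mc T2c"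
abbreviation "lb \<equiv> lift C Mb T2b"
abbreviation "N4 a b c d \<equiv> tc (tb (et a) (et b)) (tb (et c) (et d))"
abbreviation "R a b c d \<equiv> cp (\<xi> (F a) (F b) (F c) (F d)) (N4 a b c d)"

lemmas D' = D[unfolded duoidal_on_algebras_def Let_def]
lemmas xi_alghom = D'[THEN conjunct1, rule_format]
lemmas xi_nat = D'[THEN conjunct2, THEN conjunct1, rule_format]
lemmas udo = D'[THEN conjunct2, THEN conjunct2, THEN conjunct1]
lemmas A1 = D'[THEN conjunct2, THEN conjunct2, THEN conjunct2, THEN conjunct1, rule_format]
lemmas A2 = D'[THEN conjunct2, THEN conjunct2, THEN conjunct2, THEN conjunct2, THEN conjunct1, rule_format]
lemmas U = D'[THEN conjunct2, THEN conjunct2, THEN conjunct2, THEN conjunct2, THEN conjunct2, rule_format]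
lemmas udo' = udo[unfolded unit_data_ok_def Let_def]

definition algo :: "'o \<times> 'm \<Rightarrow> 'o \<Rightarrow> bool" where
  "algo A a \<longleftrightarrow> alg C T A \<and> fst A = a"

lemma algo_free: "a \<in> Obj C \<Longrightarrow> algo (F a) (T' a)"
  unfolding algo_def using Bc.free_alg by (simp add: free_alg_def)
lemma algo_lc: "algo A a \<Longrightarrow> algo B b \<Longrightarrow> algo (lc A B) (oc a b)"
  using Bc.alg_lift[of A B] unfolding algo_def by (auto simp: lift_def)
lemma algo_lb: "algo A a \<Longrightarrow> algo B b \<Longrightarrow> algo (lb A B) (ob a b)"
  using Bb.alg_lift[of A B] unfolding algo_def by (auto simp: lift_def)
lemma algo_gen: "alg C T A \<Longrightarrow> algo A (fst A)"
  unfolding algo_def by simp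
lemma alg_Bot: "alg C T (unt Mc, T0c)" using udo' unfolding alg_hom_def by blast
lemma alg_One: "alg C T (unt Mb, T0b)" using udo' unfolding alg_hom_def by blast
lemma algo_Bot: "algo (unt Mc, T0c) (unt Mc)" using alg_Bot unfolding algo_def by simp
lemma algo_One: "algo (unt Mb, T0b) (unt Mb)" using alg_One unfolding algo_def by simp

lemma h_xi: assumes "algo A a" "algo B b" "algo X x" "algo Y y"
  shows "\<xi> A B X Y \<in> Hom C (oc (ob a b) (ob x y)) (ob (oc a x) (oc b y))"
proof -
  have "alg_hom C T (lc (lb A B) (lb X Y)) (lb (lc A X) (lc B Y)) (\<xi> A B X Y)"
    using assms unfolding algo_def by (intro xi_alghom) auto
  then show ?thesis using assms unfolding alg_hom_def algo_def by (auto simp: lift_def)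
qed

lemma h_nu: "\<nu> \<in> Hom C (unt Mc) (ob (unt Mc) (unt Mc))" using udo' unfolding alg_hom_def by (auto simp: lift_def)
lemma h_om: "\<omega> \<in> Hom C (oc (unt Mb) (unt Mb)) (unt Mb)" using udo' unfolding alg_hom_def by (auto simp: lift_def)
lemma h_io: "\<iota> \<in> Hom C (unt Mc) (unt Mb)" using udo' unfolding alg_hom_def by (auto simp: lift_def)

lemmas ty = Bc.ty Bb.ty h_xi algo_free algo_lc algo_lb algo_gen algo_Bot algo_One h_nu h_om h_io
lemmas assoc = Bc.assoc

lemma ah_hom: "alg_hom C T A B f \<Longrightarrow> f \<in> Hom C (fst A) (fst B)" unfolding alg_hom_def by blast
lemma ah_alg1: "alg_hom C T A B f \<Longrightarrow> alg C T A" unfolding alg_hom_def by blast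
lemma ah_alg2: "alg_hom C T A B f \<Longrightarrow> alg C T B" unfolding alg_hom_def by blast

lemma R_nat_alg:
  assumes o: "a \<in> Obj C" "b \<in> Obj C" "c \<in> Obj C" "d \<in> Obj C"
    and hf: "alg_hom C T (F a) A f" and hg: "alg_hom C T (F b) B g"
    and hh: "alg_hom C T (F c) X h" and hk: "alg_hom C T (F d) Y k"
  shows "cp (tb (tc f h) (tc g k)) (R a b c d) =
     cp (\<xi> A B X Y) (tc (tb (cp f (et a)) (cp g (et b))) (tb (cp h (et c)) (cp k (et d))))"
proof -
  have t: "f \<in> Hom C (T' a) (fst A)" "g \<in> Hom C (T' b) (fst B)" "h \<in> Hom C (T' c) (fst X)" "k \<in> Hom C (T' d) (fst Y)"
    using hf hg hh hk by (auto dest!: ah_hom simp: free_alg_def)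
  have al: "alg C T A" "alg C T B" "alg C T X" "alg C T Y" using hf hg hh hk by (auto dest: ah_alg2)
  note tt = t al o
  have "cp (tb (tc f h) (tc g k)) (R a b c d) = cp (cp (tb (tc f h) (tc g k)) (\<xi> (F a) (F b) (F c) (F d))) (N4 a b c d)"
    by (rule assoc; blast intro: ty tt)
  also have "\<dots> = cp (cp (\<xi> A B X Y) (tc (tb f g) (tb h k))) (N4 a b c d)"
    by (simp add: xi_nat[OF hf hg hh hk])
  also have "\<dots> = cp (\<xi> A B X Y) (cp (tc (tb f g) (tb h k)) (N4 a b c d))"
    by (rule assoc[symmetric]; blast intro: ty tt)
  also have "\<dots> = cp (\<xi> A B X Y) (tc (cp (tb f g) (tb (et a) (et b))) (cp (tb h k) (tb (et c) (et d))))"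
    by (subst Bc.tmc; blast intro: ty tt)
  also have "\<dots> = cp (\<xi> A B X Y) (tc (tb (cp f (et a)) (cp g (et b))) (cp (tb h k) (tb (et c) (et d))))"
    by (subst Bb.tmc; blast intro: ty tt)
  also have "\<dots> = cp (\<xi> A B X Y) (tc (tb (cp f (et a)) (cp g (et b))) (tb (cp h (et c)) (cp k (et d))))"
    by (subst (2) Bb.tmc; blast intro: ty tt)
  finally show ?thesis .
qed

lemma R_hom: "a \<in> Obj C \<Longrightarrow> b \<in> Obj C \<Longrightarrow> c \<in> Obj C \<Longrightarrow> d \<in> Obj C \<Longrightarrow>
  R a b c d \<in> Hom C (oc (ob a b) (ob c d)) (ob (oc (T' a) (T' c)) (oc (T' b) (T' d)))"
  by (blast intro: ty)

lemma R_nat: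
  assumes hf: "f \<in> Hom C a a'" and hg: "g \<in> Hom C b b'" and hh: "h \<in> Hom C c c'" and hk: "k \<in> Hom C d d'"
  shows "cp (R a' b' c' d') (tc (tb f g) (tb h k)) = cp (tb (tc (Tf f) (Tf h)) (tc (Tf g) (Tf k))) (R a b c d)"
proof -
  have o: "a \<in> Obj C" "b \<in> Obj C" "c \<in> Obj C" "d \<in> Obj C" "a' \<in> Obj C" "b' \<in> Obj C" "c' \<in> Obj C" "d' \<in> Obj C"
    using hf hg hh hk cat_0[OF Bc.cC] by blast+
  note tt = o hf hg hh hk
  have "cp (R a' b' c' d') (tc (tb f g) (tb h k)) = cp (\<xi> (F a') (F b') (F c') (F d')) (cp (N4 a' b' c' d') (tc (tb f g) (tb h k)))"
    by (rule assoc[symmetric]; blast intro: ty tt)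
  also have "\<dots> = cp (\<xi> (F a') (F b') (F c') (F d')) (tc (cp (tb (et a') (et b')) (tb f g)) (cp (tb (et c') (et d')) (tb h k)))"
    by (subst Bc.tmc; blast intro: ty tt)
  also have "\<dots> = cp (\<xi> (F a') (F b') (F c') (F d')) (tc (tb (cp (et a') f) (cp (et b') g)) (cp (tb (et c') (et d')) (tb h k)))"
    by (subst Bb.tmc; blast intro: ty tt)
  also have "\<dots> = cp (\<xi> (F a') (F b') (F c') (F d')) (tc (tb (cp (et a') f) (cp (et b') g)) (tb (cp (et c') h) (cp (et d') k)))"
    by (subst (2) Bb.tmc; blast intro: ty tt)
  also have "\<dots> = cp (\<xi> (F a') (F b') (F c') (F d')) (tc (tb (cp (Tf f) (et a)) (cp (Tf g) (et b))) (tb (cp (Tf h) (et c)) (cp (Tf k) (et d))))"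
    using tt by (simp add: mnd_8[OF Bc.mT])
  also have "\<dots> = cp (tb (tc (Tf f) (Tf h)) (tc (Tf g) (Tf k))) (R a b c d)"
    by (rule R_nat_alg[symmetric], (rule o)+, (rule Bc.ah_Tf, rule tt)+)
  finally show ?thesis .
qed

lemma ah_Bot: "alg_hom C T (F (unt Mc)) (unt Mc, T0c) T0c"
  using Bc.ah_str[OF alg_Bot] by simp
lemma ah_One: "alg_hom C T (F (unt Mb)) (unt Mb, T0b) T0b"
  using Bb.ah_str[OF alg_One] by simp

lemmas idsimps = Bc.alg_unit bim_11[OF bc] bim_11[OF bb] mon_4[OF Bc.mM] mon_4[OF Bb.mM]
  Bc.o_t Bb.o_t Bc.o_u Bb.o_u Bc.alg_obj Bc.o_T

lemma cmps3: "cmps C [x,y,z] = cp x (cp y z)" by simp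

lemma Runit1: assumes A: "alg C T A" and B: "alg C T B"
  shows "cmps C [tb (tc T0c (snd A)) (tc T0c (snd B)), R (unt Mc) (unt Mc) (fst A) (fst B), tc \<nu> (I (ob (fst A) (fst B)))]
   = cp (\<xi> (unt Mc, T0c) (unt Mc, T0c) A B) (tc \<nu> (I (ob (fst A) (fst B))))"
proof -
  note tt = A B
  have "cmps C [tb (tc T0c (snd A)) (tc T0c (snd B)), R (unt Mc) (unt Mc) (fst A) (fst B), tc \<nu> (I (ob (fst A) (fst B)))]
     = cp (cp (tb (tc T0c (snd A)) (tc T0c (snd B))) (R (unt Mc) (unt Mc) (fst A) (fst B))) (tc \<nu> (I (ob (fst A) (fst B))))"
    unfolding cmps3 by (rule assoc; blast intro: ty tt)
  also have "\<dots> = cp (cp (\<xi> (unt Mc, T0c) (unt Mc, T0c) A B) (I (oc (ob (unt Mc) (unt Mc)) (ob (fst A) (fst B))))) (tc \<nu> (I (ob (fst A) (fst B))))"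
    by (subst R_nat_alg, (blast intro: ty tt)+, rule ah_Bot, rule ah_Bot, rule Bc.ah_str[OF A], rule Bc.ah_str[OF B],
        simp add: idsimps tt)
  also have "\<dots> = cp (\<xi> (unt Mc, T0c) (unt Mc, T0c) A B) (tc \<nu> (I (ob (fst A) (fst B))))"
    by (subst Bc.idr; blast intro: ty tt)
  finally show ?thesis .
qed

lemma Runit2: assumes A: "alg C T A" and B: "alg C T B"
  shows "cmps C [tb (tc (snd A) T0c) (tc (snd B) T0c), R (fst A) (fst B) (unt Mc) (unt Mc), tc (I (ob (fst A) (fst B))) \<nu>]
   = cp (\<xi> A B (unt Mc, T0c) (unt Mc, T0c)) (tc (I (ob (fst A) (fst B))) \<nu>)"
proof -
  note tt = A B
  have "cmps C [tb (tc (snd A) T0c) (tc (snd B) T0c), R (fst A) (fst B) (unt Mc) (unt Mc), tc (I (ob (fst A) (fst B))) \<nu>]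
     = cp (cp (tb (tc (snd A) T0c) (tc (snd B) T0c)) (R (fst A) (fst B) (unt Mc) (unt Mc))) (tc (I (ob (fst A) (fst B))) \<nu>)"
    unfolding cmps3 by (rule assoc; blast intro: ty tt)
  also have "\<dots> = cp (cp (\<xi> A B (unt Mc, T0c) (unt Mc, T0c)) (I (oc (ob (fst A) (fst B)) (ob (unt Mc) (unt Mc))))) (tc (I (ob (fst A) (fst B))) \<nu>)"
    by (subst R_nat_alg, (blast intro: ty tt)+, rule Bc.ah_str[OF A], rule Bc.ah_str[OF B], rule ah_Bot, rule ah_Bot,
        simp add: idsimps tt)
  also have "\<dots> = cp (\<xi> A B (unt Mc, T0c) (unt Mc, T0c)) (tc (I (ob (fst A) (fst B))) \<nu>)"
    by (subst Bc.idr; blast intro: ty tt)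
  finally show ?thesis .
qed

lemma Runit3: assumes A: "alg C T A" and B: "alg C T B"
  shows "cmps C [tb \<omega> (I (oc (fst A) (fst B))), tb (tc T0b T0b) (tc (snd A) (snd B)), R (unt Mb) (fst A) (unt Mb) (fst B)]
   = cp (tb \<omega> (I (oc (fst A) (fst B)))) (\<xi> (unt Mb, T0b) A (unt Mb, T0b) B)"
proof -
  note tt = A B
  have "cp (tb (tc T0b T0b) (tc (snd A) (snd B))) (R (unt Mb) (fst A) (unt Mb) (fst B))
     = cp (\<xi> (unt Mb, T0b) A (unt Mb, T0b) B) (I (oc (ob (unt Mb) (fst A)) (ob (unt Mb) (fst B))))"
    by (subst R_nat_alg, (blast intro: ty tt)+, rule ah_One, rule Bc.ah_str[OF A], rule ah_One, rule Bc.ah_str[OF B],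
        simp add: idsimps tt)
  also have "\<dots> = \<xi> (unt Mb, T0b) A (unt Mb, T0b) B"
    by (subst Bc.idr; blast intro: ty tt)
  finally show ?thesis unfolding cmps3 by simp
qed

lemma Runit4: assumes A: "alg C T A" and B: "alg C T B"
  shows "cmps C [tb (I (oc (fst A) (fst B))) \<omega>, tb (tc (snd A) (snd B)) (tc T0b T0b), R (fst A) (unt Mb) (fst B) (unt Mb)]
   = cp (tb (I (oc (fst A) (fst B))) \<omega>) (\<xi> A (unt Mb, T0b) B (unt Mb, T0b))"
proof -
  note tt = A B
  have "cp (tb (tc (snd A) (snd B)) (tc T0b T0b)) (R (fst A) (unt Mb) (fst B) (unt Mb))
     = cp (\<xi> A (unt Mb, T0b) B (unt Mb, T0b)) (I (oc (ob (fst A) (unt Mb)) (ob (fst B) (unt Mb))))"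
    by (subst R_nat_alg, (blast intro: ty tt)+, rule Bc.ah_str[OF A], rule ah_One, rule Bc.ah_str[OF B], rule ah_One,
        simp add: idsimps tt)
  also have "\<dots> = \<xi> A (unt Mb, T0b) B (unt Mb, T0b)"
    by (subst Bc.idr; blast intro: ty tt)
  finally show ?thesis unfolding cmps3 by simp
qed

lemma R_mu: assumes o: "a \<in> Obj C" "b \<in> Obj C" "c \<in> Obj C" "d \<in> Obj C"
  shows "cp (tb (tc (mm a) (mm c)) (tc (mm b) (mm d))) (R (T' a) (T' b) (T' c) (T' d)) = \<xi> (F a) (F b) (F c) (F d)"
proof -
  note tt = o
  have "cp (tb (tc (mm a) (mm c)) (tc (mm b) (mm d))) (R (T' a) (T' b) (T' c) (T' d))
    = cp (\<xi> (F a) (F b) (F c) (F d)) (I (oc (ob (T' a) (T' b)) (ob (T' c) (T' d))))"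
    by (subst R_nat_alg, (blast intro: ty tt)+, (rule Bc.ah_mu, rule tt)+, simp add: idsimps tt mnd_10[OF Bc.mT])
  also have "\<dots> = \<xi> (F a) (F b) (F c) (F d)"
    by (subst Bc.idr; blast intro: ty tt)
  finally show ?thesis .
qed

lemma Rlift: assumes o: "a \<in> Obj C" "b \<in> Obj C" "c \<in> Obj C" "d \<in> Obj C"
  shows "cmps C [tb (tc (mm a) (mm c)) (tc (mm b) (mm d)), R (T' a) (T' b) (T' c) (T' d),
                tc (T2b a b) (T2b c d), T2c (ob a b) (ob c d)] =
         cmps C [tb (tc (mm a) (mm c)) (tc (mm b) (mm d)),
                tb (T2c (T' a) (T' c)) (T2c (T' b) (T' d)),
                T2b (oc (T' a) (T' c)) (oc (T' b) (T' d)), Tf (R a b c d)]"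
proof -
  note tt = o
  let ?X = "tb (tc (mm a) (mm c)) (tc (mm b) (mm d))"
  let ?G = "cp (tc (T2b a b) (T2b c d)) (T2c (ob a b) (ob c d))"
  let ?x0 = "\<xi> (F a) (F b) (F c) (F d)"
  let ?W = "tb (T2c (T' a) (T' c)) (T2c (T' b) (T' d))"
  let ?V = "T2b (oc (T' a) (T' c)) (oc (T' b) (T' d))"
  let ?Sx = "cp (tb (cp (tc (mm a) (mm c)) (T2c (T' a) (T' c))) (cp (tc (mm b) (mm d)) (T2c (T' b) (T' d)))) ?V"
  let ?P1 = "cp (tb (mm a) (mm b)) (T2b (T' a) (T' b))"
  let ?P2 = "cp (tb (mm c) (mm d)) (T2b (T' c) (T' d))"
  let ?Ss = "cp (tc ?P1 ?P2) (T2c (ob (T' a) (T' b)) (ob (T' c) (T' d)))"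
  have L: "cmps C [?X, R (T' a) (T' b) (T' c) (T' d), tc (T2b a b) (T2b c d), T2c (ob a b) (ob c d)] = cp ?x0 ?G"
  proof -
    have "cmps C [?X, R (T' a) (T' b) (T' c) (T' d), tc (T2b a b) (T2b c d), T2c (ob a b) (ob c d)]
       = cp (cp ?X (R (T' a) (T' b) (T' c) (T' d))) ?G"
      by (simp, rule assoc; blast intro: ty tt)
    then show ?thesis using R_mu[OF o] by simp
  qed
  have xa: "cp ?x0 ?Ss = cp ?Sx (Tf ?x0)"
    using xi_alghom[of "F a" "F b" "F c" "F d"] Bc.free_alg o by (simp add: alg_hom_def lift_def free_alg_def)
  have sg: "cp ?Ss (Tf (N4 a b c d)) = ?G"
  proof -
    have "cp ?Ss (Tf (N4 a b c d)) = cp (tc ?P1 ?P2) (cp (T2c (ob (T' a) (T' b)) (ob (T' c) (T' d))) (Tf (N4 a b c d)))"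
      by (rule assoc[symmetric]; blast intro: ty tt)
    also have "\<dots> = cp (tc ?P1 ?P2) (cp (tc (Tf (tb (et a) (et b))) (Tf (tb (et c) (et d)))) (T2c (ob a b) (ob c d)))"
      by (subst bim_4[OF bc]; blast intro: ty tt)
    also have "\<dots> = cp (cp (tc ?P1 ?P2) (tc (Tf (tb (et a) (et b))) (Tf (tb (et c) (et d))))) (T2c (ob a b) (ob c d))"
      by (rule assoc; blast intro: ty tt)
    also have "\<dots> = cp (tc (cp ?P1 (Tf (tb (et a) (et b)))) (cp ?P2 (Tf (tb (et c) (et d))))) (T2c (ob a b) (ob c d))"
      by (subst Bc.tmc; blast intro: ty tt)
    also have "\<dots> = ?G" using tt by (simp add: Bb.P_lemma)
    finally show ?thesis .
  qed
  have "cmps C [?X, ?W, ?V, Tf (R a b c d)] = cp ?X (cp ?W (cp ?V (Tf (R a b c d))))" by simp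
  also have "\<dots> = cp ?X (cp (cp ?W ?V) (Tf (R a b c d)))"
    by (subst assoc; blast intro: ty tt)
  also have "\<dots> = cp (cp ?X (cp ?W ?V)) (Tf (R a b c d))"
    by (rule assoc; blast intro: ty tt)
  also have "\<dots> = cp (cp (cp ?X ?W) ?V) (Tf (R a b c d))"
    by (subst assoc; blast intro: ty tt)
  also have "\<dots> = cp ?Sx (Tf (R a b c d))"
    by (subst Bb.tmc; blast intro: ty tt)
  also have "\<dots> = cp ?Sx (cp (Tf ?x0) (Tf (N4 a b c d)))"
    by (subst mnd_4[OF Bc.mT]; blast intro: ty tt)
  also have "\<dots> = cp (cp ?Sx (Tf ?x0)) (Tf (N4 a b c d))"
    by (rule assoc; blast intro: ty tt)
  also have "\<dots> = cp (cp ?x0 ?Ss) (Tf (N4 a b c d))" by (simp add: xa)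
  also have "\<dots> = cp ?x0 (cp ?Ss (Tf (N4 a b c d)))"
    by (rule assoc[symmetric]; blast intro: ty tt)
  also have "\<dots> = cp ?x0 ?G" by (simp add: sg)
  finally show ?thesis using L by simp
qed

lemma idid: "a \<in> Obj C \<Longrightarrow> cp (I a) (I a) = I a" by (rule Bc.idl; blast intro: ty)

lemma I_eta: "a \<in> Obj C \<Longrightarrow> cp (I (T' a)) (et a) = et a" by (rule Bc.idl; blast intro: ty)

lemma fst_free: "fst (F a) = T' a" by (simp add: free_alg_def)

lemma ah_lc: assumes "a \<in> Obj C" "c \<in> Obj C"
  shows "alg_hom C T (F (oc (T' a) (T' c))) (lc (F a) (F c)) (cp (tc (mm a) (mm c)) (T2c (T' a) (T' c)))"
  using Bc.ah_str[OF Bc.alg_lift[OF Bc.free_alg Bc.free_alg]] assms by (simp add: lift_def free_alg_def)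
lemma ah_lb: assumes "a \<in> Obj C" "c \<in> Obj C"
  shows "alg_hom C T (F (ob (T' a) (T' c))) (lb (F a) (F c)) (cp (tb (mm a) (mm c)) (T2b (T' a) (T' c)))"
  using Bb.ah_str[OF Bb.alg_lift[OF Bb.free_alg Bb.free_alg]] assms by (simp add: lift_def free_alg_def)
lemma unit_lc: assumes "a \<in> Obj C" "c \<in> Obj C"
  shows "cp (cp (tc (mm a) (mm c)) (T2c (T' a) (T' c))) (et (oc (T' a) (T' c))) = I (oc (T' a) (T' c))"
  using Bc.alg_unit[OF Bc.alg_lift[OF Bc.free_alg Bc.free_alg]] assms by (simp add: lift_def free_alg_def)
lemma unit_lb: assumes "a \<in> Obj C" "c \<in> Obj C"
  shows "cp (cp (tb (mm a) (mm c)) (T2b (T' a) (T' c))) (et (ob (T' a) (T' c))) = I (ob (T' a) (T' c))"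
  using Bb.alg_unit[OF Bb.alg_lift[OF Bb.free_alg Bb.free_alg]] assms by (simp add: lift_def free_alg_def)

lemma R1: assumes o: "a \<in> Obj C" "b \<in> Obj C" "c \<in> Obj C" "d \<in> Obj C" "x \<in> Obj C" "y \<in> Obj C"
  shows "cmps C [tb (asc Mc (T' a) (T' c) (T' x)) (asc Mc (T' b) (T' d) (T' y)),
                tb (tc (tc (mm a) (mm c)) (I (T' x))) (tc (tc (mm b) (mm d)) (I (T' y))),
                tb (tc (T2c (T' a) (T' c)) (I (T' x))) (tc (T2c (T' b) (T' d)) (I (T' y))),
                R (oc (T' a) (T' c)) (oc (T' b) (T' d)) x y,
                tc (R a b c d) (I (ob x y))] =
        cmps C [tb (tc (I (T' a)) (tc (mm c) (mm x))) (tc (I (T' b)) (tc (mm d) (mm y))),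
                tb (tc (I (T' a)) (T2c (T' c) (T' x))) (tc (I (T' b)) (T2c (T' d) (T' y))),
                R a b (oc (T' c) (T' x)) (oc (T' d) (T' y)),
                tc (I (ob a b)) (R c d x y),
                asc Mc (ob a b) (ob c d) (ob x y)]"
proof -
  note tt = o
  let ?K = "tb (asc Mc (T' a) (T' c) (T' x)) (asc Mc (T' b) (T' d) (T' y))"
  let ?X1 = "tb (tc (tc (mm a) (mm c)) (I (T' x))) (tc (tc (mm b) (mm d)) (I (T' y)))"
  let ?X2 = "tb (tc (T2c (T' a) (T' c)) (I (T' x))) (tc (T2c (T' b) (T' d)) (I (T' y)))"
  let ?R' = "R (oc (T' a) (T' c)) (oc (T' b) (T' d)) x y"
  let ?x0 = "\<xi> (F a) (F b) (F c) (F d)"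
  let ?Y = "tc (R a b c d) (I (ob x y))"
  let ?sAC = "cp (tc (mm a) (mm c)) (T2c (T' a) (T' c))"
  let ?sBD = "cp (tc (mm b) (mm d)) (T2c (T' b) (T' d))"
  let ?Q1 = "tb (tc ?sAC (I (T' x))) (tc ?sBD (I (T' y)))"
  let ?xi' = "\<xi> (lc (F a) (F c)) (lc (F b) (F d)) (F x) (F y)"
  let ?I2 = "I (ob (oc (T' a) (T' c)) (oc (T' b) (T' d)))"
  let ?Z = "tc (N4 a b c d) (tb (et x) (et y))"
  let ?Y1 = "tb (tc (I (T' a)) (tc (mm c) (mm x))) (tc (I (T' b)) (tc (mm d) (mm y)))"
  let ?Y2 = "tb (tc (I (T' a)) (T2c (T' c) (T' x))) (tc (I (T' b)) (T2c (T' d) (T' y)))"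
  let ?R'' = "R a b (oc (T' c) (T' x)) (oc (T' d) (T' y))"
  let ?xc = "\<xi> (F c) (F d) (F x) (F y)"
  let ?W2 = "tc (I (ob a b)) (R c d x y)"
  let ?K2 = "asc Mc (ob a b) (ob c d) (ob x y)"
  let ?sCX = "cp (tc (mm c) (mm x)) (T2c (T' c) (T' x))"
  let ?sDY = "cp (tc (mm d) (mm y)) (T2c (T' d) (T' y))"
  let ?Q2 = "tb (tc (I (T' a)) ?sCX) (tc (I (T' b)) ?sDY)"
  let ?xi'' = "\<xi> (F a) (F b) (lc (F c) (F x)) (lc (F d) (F y))"
  let ?I3 = "I (ob (oc (T' c) (T' x)) (oc (T' d) (T' y)))"
  let ?asc' = "asc Mc (ob (T' a) (T' b)) (ob (T' c) (T' d)) (ob (T' x) (T' y))"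
  have a1: "cp ?K (cp ?xi' (tc ?x0 (I (ob (T' x) (T' y))))) = cp ?xi'' (cp (tc (I (ob (T' a) (T' b))) ?xc) ?asc')"
    using A1[of "F a" "F b" "F c" "F d" "F x" "F y"] Bc.free_alg o by (simp add: fst_free)
  have q1: "cp ?X1 ?X2 = ?Q1"
  proof -
    have "?Q1 = tb (tc ?sAC (cp (I (T' x)) (I (T' x)))) (tc ?sBD (cp (I (T' y)) (I (T' y))))"
      using tt by (simp add: idid Bc.o_T)
    also have "\<dots> = tb (cp (tc (tc (mm a) (mm c)) (I (T' x))) (tc (T2c (T' a) (T' c)) (I (T' x)))) (tc ?sBD (cp (I (T' y)) (I (T' y))))"
      by (subst Bc.tmc; blast intro: ty tt)
    also have "\<dots> = tb (cp (tc (tc (mm a) (mm c)) (I (T' x))) (tc (T2c (T' a) (T' c)) (I (T' x)))) (cp (tc (tc (mm b) (mm d)) (I (T' y))) (tc (T2c (T' b) (T' d)) (I (T' y))))"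
      by (subst Bc.tmc; blast intro: ty tt)
    also have "\<dots> = cp ?X1 ?X2"
      by (subst Bb.tmc; blast intro: ty tt)
    finally show ?thesis by simp
  qed
  have q1r: "cp ?Q1 ?R' = cp ?xi' (tc ?I2 (tb (et x) (et y)))"
    by (subst R_nat_alg, (blast intro: ty tt)+, rule ah_lc, (rule tt)+, rule ah_lc, (rule tt)+,
        rule Bc.ah_id, (blast intro: ty tt), rule Bc.ah_id, (blast intro: ty tt),
        subst unit_lc, (rule tt)+, subst unit_lc, (rule tt)+,
        subst Bc.idl, (blast intro: ty tt)+, subst Bc.idl, (blast intro: ty tt)+,
        simp add: idsimps tt)
  have hR: "R a b c d \<in> Hom C (oc (ob a b) (ob c d)) (ob (oc (T' a) (T' c)) (oc (T' b) (T' d)))"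
    by (rule R_hom; rule tt)
  have he: "tb (et x) (et y) \<in> Hom C (ob x y) (ob (T' x) (T' y))" by (blast intro: ty tt)
  have y5: "cp (tc ?I2 (tb (et x) (et y))) ?Y = cp (tc ?x0 (I (ob (T' x) (T' y)))) ?Z"
  proof -
    have "cp (tc ?I2 (tb (et x) (et y))) ?Y = tc (cp ?I2 (R a b c d)) (cp (tb (et x) (et y)) (I (ob x y)))"
      by (subst Bc.tmc; blast intro: ty tt)
    also have "\<dots> = tc (R a b c d) (tb (et x) (et y))"
      by (simp only: Bc.idl[OF hR] Bc.idr[OF he])
    also have "\<dots> = tc (cp ?x0 (N4 a b c d)) (cp (I (ob (T' x) (T' y))) (tb (et x) (et y)))"
      by (simp only: Bc.idl[OF he])
    also have "\<dots> = cp (tc ?x0 (I (ob (T' x) (T' y)))) ?Z"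
      by (subst Bc.tmc; blast intro: ty tt)
    finally show ?thesis .
  qed
  have "cmps C [?K, ?X1, ?X2, ?R', ?Y] = cp ?K (cp ?X1 (cp ?X2 (cp ?R' ?Y)))" by simp
  also have "\<dots> = cp ?K (cp (cp ?X1 ?X2) (cp ?R' ?Y))"
    by (rule arg_cong[where f="cp ?K"], rule assoc; blast intro: ty tt)
  also have "\<dots> = cp ?K (cp (cp ?Q1 ?R') ?Y)"
    by (simp only: q1, rule arg_cong[where f="cp ?K"], rule assoc; blast intro: ty tt)
  also have "\<dots> = cp ?K (cp ?xi' (cp (tc ?I2 (tb (et x) (et y))) ?Y))"
    by (simp only: q1r, rule arg_cong[where f="cp ?K"], rule assoc[symmetric]; blast intro: ty tt)
  also have "\<dots> = cp ?K (cp ?xi' (cp (tc ?x0 (I (ob (T' x) (T' y)))) ?Z))"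
    by (simp only: y5)
  also have "\<dots> = cp ?K (cp (cp ?xi' (tc ?x0 (I (ob (T' x) (T' y))))) ?Z)"
    by (rule arg_cong[where f="cp ?K"], rule assoc; blast intro: ty tt)
  also have "\<dots> = cp (cp ?K (cp ?xi' (tc ?x0 (I (ob (T' x) (T' y)))))) ?Z"
    by (rule assoc; blast intro: ty tt)
  also have "\<dots> = cp (cp ?xi'' (cp (tc (I (ob (T' a) (T' b))) ?xc) ?asc')) ?Z"
    by (simp only: a1)
  finally have LHS: "cmps C [?K, ?X1, ?X2, ?R', ?Y] = cp (cp ?xi'' (cp (tc (I (ob (T' a) (T' b))) ?xc) ?asc')) ?Z" .
  have q2: "cp ?Y1 ?Y2 = ?Q2"
  proof -
    have "?Q2 = tb (tc (cp (I (T' a)) (I (T' a))) ?sCX) (tc (cp (I (T' b)) (I (T' b))) ?sDY)"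
      using tt by (simp add: idid Bc.o_T)
    also have "\<dots> = tb (cp (tc (I (T' a)) (tc (mm c) (mm x))) (tc (I (T' a)) (T2c (T' c) (T' x)))) (tc (cp (I (T' b)) (I (T' b))) ?sDY)"
      by (subst Bc.tmc; blast intro: ty tt)
    also have "\<dots> = tb (cp (tc (I (T' a)) (tc (mm c) (mm x))) (tc (I (T' a)) (T2c (T' c) (T' x)))) (cp (tc (I (T' b)) (tc (mm d) (mm y))) (tc (I (T' b)) (T2c (T' d) (T' y))))"
      by (subst Bc.tmc; blast intro: ty tt)
    also have "\<dots> = cp ?Y1 ?Y2"
      by (subst Bb.tmc; blast intro: ty tt)
    finally show ?thesis by simp
  qed
  have q2r: "cp ?Q2 ?R'' = cp ?xi'' (tc (tb (et a) (et b)) ?I3)"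
    by (subst R_nat_alg, (blast intro: ty tt)+, 
        rule Bc.ah_id, (blast intro: ty tt), rule Bc.ah_id, (blast intro: ty tt),
        rule ah_lc, (rule tt)+, rule ah_lc, (rule tt)+,
        subst unit_lc, (rule tt)+, subst unit_lc, (rule tt)+,
        subst Bc.idl, (blast intro: ty tt)+, subst Bc.idl, (blast intro: ty tt)+,
        simp add: idsimps tt)
  have hR': "R c d x y \<in> Hom C (oc (ob c d) (ob x y)) (ob (oc (T' c) (T' x)) (oc (T' d) (T' y)))"
    by (rule R_hom; rule tt)
  have he': "tb (et a) (et b) \<in> Hom C (ob a b) (ob (T' a) (T' b))" by (blast intro: ty tt)
  have w2: "cp (tc (tb (et a) (et b)) ?I3) ?W2 = cp (tc (I (ob (T' a) (T' b))) ?xc) (tc (tb (et a) (et b)) (N4 c d x y))"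
  proof -
    have "cp (tc (tb (et a) (et b)) ?I3) ?W2 = tc (cp (tb (et a) (et b)) (I (ob a b))) (cp ?I3 (R c d x y))"
      by (subst Bc.tmc; blast intro: ty tt)
    also have "\<dots> = tc (tb (et a) (et b)) (R c d x y)"
      by (simp only: Bc.idl[OF hR'] Bc.idr[OF he'])
    also have "\<dots> = tc (cp (I (ob (T' a) (T' b))) (tb (et a) (et b))) (cp ?xc (N4 c d x y))"
      by (simp only: Bc.idl[OF he'])
    also have "\<dots> = cp (tc (I (ob (T' a) (T' b))) ?xc) (tc (tb (et a) (et b)) (N4 c d x y))"
      by (subst Bc.tmc; blast intro: ty tt)
    finally show ?thesis .
  qed
  have k2: "cp (tc (tb (et a) (et b)) (N4 c d x y)) ?K2 = cp ?asc' ?Z"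
    by (rule mon_7[OF Bc.mM, symmetric]; blast intro: ty tt)
  have "cmps C [?Y1, ?Y2, ?R'', ?W2, ?K2] = cp ?Y1 (cp ?Y2 (cp ?R'' (cp ?W2 ?K2)))" by simp
  also have "\<dots> = cp (cp ?Y1 ?Y2) (cp ?R'' (cp ?W2 ?K2))"
    by (rule assoc; blast intro: ty tt)
  also have "\<dots> = cp (cp ?Q2 ?R'') (cp ?W2 ?K2)"
    by (simp only: q2, rule assoc; blast intro: ty tt)
  also have "\<dots> = cp ?xi'' (cp (tc (tb (et a) (et b)) ?I3) (cp ?W2 ?K2))"
    by (simp only: q2r, rule assoc[symmetric]; blast intro: ty tt)
  also have "\<dots> = cp ?xi'' (cp (cp (tc (tb (et a) (et b)) ?I3) ?W2) ?K2)"
    by (rule arg_cong[where f="cp ?xi''"], rule assoc; blast intro: ty tt)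
  also have "\<dots> = cp ?xi'' (cp (tc (I (ob (T' a) (T' b))) ?xc) (cp (tc (tb (et a) (et b)) (N4 c d x y)) ?K2))"
    by (simp only: w2, rule arg_cong[where f="cp ?xi''"], rule assoc[symmetric]; blast intro: ty tt)
  also have "\<dots> = cp ?xi'' (cp (tc (I (ob (T' a) (T' b))) ?xc) (cp ?asc' ?Z))"
    by (simp only: k2)
  also have "\<dots> = cp ?xi'' (cp (cp (tc (I (ob (T' a) (T' b))) ?xc) ?asc') ?Z)"
    by (rule arg_cong[where f="cp ?xi''"], rule assoc; blast intro: ty tt)
  also have "\<dots> = cp (cp ?xi'' (cp (tc (I (ob (T' a) (T' b))) ?xc) ?asc')) ?Z"
    by (rule assoc; blast intro: ty tt)
  finally have RHS: "cmps C [?Y1, ?Y2, ?R'', ?W2, ?K2] = cp (cp ?xi'' (cp (tc (I (ob (T' a) (T' b))) ?xc) ?asc')) ?Z" .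
  show ?thesis using LHS RHS by simp
qed

lemma R2: assumes o: "x \<in> Obj C" "a \<in> Obj C" "c \<in> Obj C" "y \<in> Obj C" "b \<in> Obj C" "d \<in> Obj C"
  shows "cmps C [asc Mb (oc (T' x) (T' y)) (oc (T' a) (T' b)) (oc (T' c) (T' d)),
                tb (tb (tc (mm x) (mm y)) (tc (mm a) (mm b))) (I (oc (T' c) (T' d))),
                tb (R (T' x) (T' a) (T' y) (T' b)) (I (oc (T' c) (T' d))),
                tb (tc (T2b x a) (T2b y b)) (I (oc (T' c) (T' d))),
                R (ob x a) c (ob y b) d] =
        cmps C [tb (I (oc (T' x) (T' y))) (tb (tc (mm a) (mm b)) (tc (mm c) (mm d))),
                tb (I (oc (T' x) (T' y))) (R (T' a) (T' c) (T' b) (T' d)),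
                tb (I (oc (T' x) (T' y))) (tc (T2b a c) (T2b b d)),
                R x (ob a c) y (ob b d),
                tc (asc Mb x a c) (asc Mb y b d)]"
proof -
  note tt = o
  let ?K = "asc Mb (oc (T' x) (T' y)) (oc (T' a) (T' b)) (oc (T' c) (T' d))"
  let ?X1 = "tb (tb (tc (mm x) (mm y)) (tc (mm a) (mm b))) (I (oc (T' c) (T' d)))"
  let ?X2 = "tb (R (T' x) (T' a) (T' y) (T' b)) (I (oc (T' c) (T' d)))"
  let ?X3 = "tb (tc (T2b x a) (T2b y b)) (I (oc (T' c) (T' d)))"
  let ?R' = "R (ob x a) c (ob y b) d"
  let ?xi1 = "\<xi> (F x) (F a) (F y) (F b)"
  let ?xi2 = "\<xi> (lb (F x) (F a)) (F c) (lb (F y) (F b)) (F d)"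
  let ?Z2 = "tc (tb (tb (et x) (et a)) (et c)) (tb (tb (et y) (et b)) (et d))"
  let ?Y1 = "tb (I (oc (T' x) (T' y))) (tb (tc (mm a) (mm b)) (tc (mm c) (mm d)))"
  let ?Y2 = "tb (I (oc (T' x) (T' y))) (R (T' a) (T' c) (T' b) (T' d))"
  let ?Y3 = "tb (I (oc (T' x) (T' y))) (tc (T2b a c) (T2b b d))"
  let ?R'' = "R x (ob a c) y (ob b d)"
  let ?W = "tc (asc Mb x a c) (asc Mb y b d)"
  let ?xia = "\<xi> (F a) (F c) (F b) (F d)"
  let ?xi3 = "\<xi> (F x) (lb (F a) (F c)) (F y) (lb (F b) (F d))"
  let ?V = "tc (tb (et x) (tb (et a) (et c))) (tb (et y) (tb (et b) (et d)))"
  let ?ascT = "tc (asc Mb (T' x) (T' a) (T' c)) (asc Mb (T' y) (T' b) (T' d))"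
  have a2: "cp ?K (cp (tb ?xi1 (I (oc (T' c) (T' d)))) ?xi2) = cp (tb (I (oc (T' x) (T' y))) ?xia) (cp ?xi3 ?ascT)"
    using A2[of "F x" "F y" "F a" "F b" "F c" "F d"] Bc.free_alg o by (simp add: fst_free)
  have ic: "I (oc (T' c) (T' d)) = tc (I (T' c)) (I (T' d))" using tt by (simp add: idsimps)
  have ix: "I (oc (T' x) (T' y)) = tc (I (T' x)) (I (T' y))" using tt by (simp add: idsimps)
  have q1: "cp ?X1 ?X2 = tb ?xi1 (I (oc (T' c) (T' d)))"
    by (subst Bb.tmc[symmetric], (blast intro: ty tt)+, simp add: R_mu tt idid Bc.o_T Bc.o_t)
  have q3: "cp ?X3 ?R' = cp ?xi2 ?Z2"
    unfolding ic
    by (subst R_nat_alg, (blast intro: ty tt)+, 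
        rule Bb.ah_T2, (rule tt)+, rule Bc.ah_id, (rule tt), rule Bb.ah_T2, (rule tt)+, rule Bc.ah_id, (rule tt),
        simp add: bim_10[OF bb] I_eta tt)
  have "cmps C [?K, ?X1, ?X2, ?X3, ?R'] = cp ?K (cp ?X1 (cp ?X2 (cp ?X3 ?R')))" by simp
  also have "\<dots> = cp ?K (cp (cp ?X1 ?X2) (cp ?X3 ?R'))"
    by (rule arg_cong[where f="cp ?K"], rule assoc; blast intro: ty tt)
  also have "\<dots> = cp ?K (cp (tb ?xi1 (I (oc (T' c) (T' d)))) (cp ?xi2 ?Z2))"
    by (simp only: q1 q3)
  also have "\<dots> = cp ?K (cp (cp (tb ?xi1 (I (oc (T' c) (T' d)))) ?xi2) ?Z2)"
    by (rule arg_cong[where f="cp ?K"], rule assoc; blast intro: ty tt)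
  also have "\<dots> = cp (cp ?K (cp (tb ?xi1 (I (oc (T' c) (T' d)))) ?xi2)) ?Z2"
    by (rule assoc; blast intro: ty tt)
  finally have LHS: "cmps C [?K, ?X1, ?X2, ?X3, ?R'] = cp (cp (tb (I (oc (T' x) (T' y))) ?xia) (cp ?xi3 ?ascT)) ?Z2"
    by (simp only: a2)
  have q2: "cp ?Y1 ?Y2 = tb (I (oc (T' x) (T' y))) ?xia"
    by (subst Bb.tmc[symmetric], (blast intro: ty tt)+, simp add: R_mu tt idid Bc.o_T Bc.o_t)
  have q4: "cp ?Y3 ?R'' = cp ?xi3 ?V"
    unfolding ix
    by (subst R_nat_alg, (blast intro: ty tt)+, 
        rule Bc.ah_id, (rule tt), rule Bb.ah_T2, (rule tt)+, rule Bc.ah_id, (rule tt), rule Bb.ah_T2, (rule tt)+,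
        simp add: bim_10[OF bb] I_eta tt)
  have vw: "cp ?V ?W = cp ?ascT ?Z2"
  proof -
    have "cp ?V ?W = tc (cp (tb (et x) (tb (et a) (et c))) (asc Mb x a c)) (cp (tb (et y) (tb (et b) (et d))) (asc Mb y b d))"
      by (subst Bc.tmc; blast intro: ty tt)
    also have "\<dots> = tc (cp (asc Mb (T' x) (T' a) (T' c)) (tb (tb (et x) (et a)) (et c))) (cp (asc Mb (T' y) (T' b) (T' d)) (tb (tb (et y) (et b)) (et d)))"
    proof -
      have n1: "cp (asc Mb (T' x) (T' a) (T' c)) (tb (tb (et x) (et a)) (et c)) = cp (tb (et x) (tb (et a) (et c))) (asc Mb x a c)"
        by (rule mon_7[OF Bb.mM]; blast intro: ty tt)
      have n2: "cp (asc Mb (T' y) (T' b) (T' d)) (tb (tb (et y) (et b)) (et d)) = cp (tb (et y) (tb (et b) (et d))) (asc Mb y b d)"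
        by (rule mon_7[OF Bb.mM]; blast intro: ty tt)
      show ?thesis by (simp only: n1 n2)
    qed
    also have "\<dots> = cp ?ascT ?Z2"
      by (subst Bc.tmc; blast intro: ty tt)
    finally show ?thesis .
  qed
  have "cmps C [?Y1, ?Y2, ?Y3, ?R'', ?W] = cp ?Y1 (cp ?Y2 (cp ?Y3 (cp ?R'' ?W)))" by simp
  also have "\<dots> = cp ?Y1 (cp ?Y2 (cp (cp ?Y3 ?R'') ?W))"
    by (rule arg_cong[where f="cp ?Y1"], rule arg_cong[where f="cp ?Y2"], rule assoc; blast intro: ty tt)
  also have "\<dots> = cp (cp ?Y1 ?Y2) (cp (cp ?Y3 ?R'') ?W)"
    by (rule assoc; blast intro: ty tt)
  also have "\<dots> = cp (tb (I (oc (T' x) (T' y))) ?xia) (cp (cp ?xi3 ?V) ?W)"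
    by (simp only: q2 q4)
  also have "\<dots> = cp (tb (I (oc (T' x) (T' y))) ?xia) (cp ?xi3 (cp ?ascT ?Z2))"
    by (subst assoc[symmetric], (blast intro: ty tt)+, simp only: vw)
  also have "\<dots> = cp (tb (I (oc (T' x) (T' y))) ?xia) (cp (cp ?xi3 ?ascT) ?Z2)"
    by (rule arg_cong[where f="cp (tb (I (oc (T' x) (T' y))) ?xia)"], rule assoc; blast intro: ty tt)
  also have "\<dots> = cp (cp (tb (I (oc (T' x) (T' y))) ?xia) (cp ?xi3 ?ascT)) ?Z2"
    by (rule assoc; blast intro: ty tt)
  finally have RHS: "cmps C [?Y1, ?Y2, ?Y3, ?R'', ?W] = cp (cp (tb (I (oc (T' x) (T' y))) ?xia) (cp ?xi3 ?ascT)) ?Z2" .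
  show ?thesis using LHS RHS by simp
qed

end

theorem mainTheorem3:
  fixes C :: "('o,'m) category" and Mc Mb :: "('o,'m) monoidal" and T :: "('o,'m) monad"
    and T2c T2b :: "'o \<Rightarrow> 'o \<Rightarrow> 'm" and T0c T0b :: 'm
    and \<xi> :: "'o \<times> 'm \<Rightarrow> 'o \<times> 'm \<Rightarrow> 'o \<times> 'm \<Rightarrow> 'o \<times> 'm \<Rightarrow> 'm"
    and \<nu> \<omega> \<iota> :: 'm
  assumes "sep_opmonoidal_monad C Mc Mb T T2c T0c T2b T0b"
    and "duoidal_on_algebras C Mc Mb T T2c T0c T2b T0b \<xi> \<nu> \<omega> \<iota>"
  shows "r_matrix C Mc Mb T T2c T0c T2b T0b
           (\<lambda>a b c d. cmp C (\<xi> (free_alg T a) (free_alg T b) (free_alg T c) (free_alg T d))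
                             (tm Mc (tm Mb (eta T a) (eta T b)) (tm Mb (eta T c) (eta T d))))
           \<nu> \<omega> \<iota>"
proof -
  interpret ctx C Mc Mb T T2c T2b T0c T0b \<xi> \<nu> \<omega> \<iota>
    by (rule ctx.intro; fact)
  show ?thesis
    unfolding r_matrix_def Let_def
    apply (intro conjI)
    subgoal by (intro ballI, rule R_hom)
    subgoal by (intro allI impI, rule R_nat)
    subgoal by (rule udo)
    subgoal
      apply (intro allI impI)
      subgoal for A B
        using U[of A B] Runit1[of A B] Runit2[of A B] Runit3[of A B] Runit4[of A B] by simp
      done
    subgoal by (intro ballI, rule Rlift)
    subgoal by (intro ballI, rule R1)
    subgoal by (intro ballI, rule R2)
    done
qed

end
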